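(* Let $E_1=(\bar S,\bar V_1,\bar I_1,0)$, with $\bar S,\bar V_1,\bar I_1>0$, be a single-strain ($I_1$)-infection equilibrium of the model. Let $\bar{\mathcal{R}}_2=\frac{1}{\alpha_2}\frac{\partial F_2}{\partial I_2}(\bar S,0)+\frac{k\bar V_1}{\alpha_2}$. Then $E_1$ is unstable if $\bar{\mathcal{R}}_2>1$ and locally asymptotically stable if $\bar{\mathcal{R}}_2<1$.
   Context: The model is $\dot S=\Lambda-F_1(S,I_1)-F_2(S,I_2)-\lambda S$, $\dot V_1=rS-(\mu+kI_2)V_1$, $\dot I_1=F_1(S,I_1)-\alpha_1I_1$, $\dot I_2=F_2(S,I_2)+kI_2V_1-\alpha_2I_2$ on $\mathbb{R}^4_+$. The constants $\Lambda,\mu,r,k,\gamma_1,\gamma_2>0$ and $v_1,v_2\ge0$; $\lambda=r+\mu$ and $\alpha_i=\gamma_i+v_i+\mu$. For $i=1,2$ the incidence functions satisfy: - (H1) $F_i(S,I_i)=I_if_i(S,I_i)$ with $F_i,f_i\in C^2(\mathbb{R}^2_+,\mathbb{R}_+)$ and $F_i(0,I_i)=F_i(S,0)=0$; - (H2) $\partial f_i/\partial S>0$ and $\partial f_i/\partial I_i\le0$; - (H3) $\lim_{I_i\to0^+}F_i(S,I_i)/I_i$ exists and is positive for $S>0$. *)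

theory Defs
  imports "HOL-Analysis.Analysis"
begin

type_synonym state = "real \<times> real \<times> real \<times> real"

definition quadrant :: "(real \<times> real) set" where
  "quadrant = {(S, I). 0 \<le> S \<and> 0 \<le> I}"

definition orthant4 :: "state set" where
  "orthant4 = {(S, V, I1, I2). 0 \<le> S \<and> 0 \<le> V \<and> 0 \<le> I1 \<and> 0 \<le> I2}"

definition C2_on :: "(real \<times> real \<Rightarrow> real) \<Rightarrow> (real \<times> real) set \<Rightarrow> bool" where
  "C2_on F A \<longleftrightarrow> (\<exists>U F' F''. open U \<and> A \<subseteq> U \<and>
      (\<forall>x\<in>U. (F has_derivative blinfun_apply (F' x)) (at x)) \<and>
      (\<forall>x\<in>U. (F' has_derivative blinfun_apply (F'' x)) (at x)) \<and>
      continuous_on U F'')"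

definition pdS :: "(real \<times> real \<Rightarrow> real) \<Rightarrow> real \<Rightarrow> real \<Rightarrow> real" where
  "pdS F S I = deriv (\<lambda>s. F (s, I)) S"

definition pdI :: "(real \<times> real \<Rightarrow> real) \<Rightarrow> real \<Rightarrow> real \<Rightarrow> real" where
  "pdI F S I = deriv (\<lambda>y. F (S, y)) I"

text \<open>Hypotheses (H1)-(H3) on an incidence function F with F = I f.\<close>
definition incidence_hyp :: "(real \<times> real \<Rightarrow> real) \<Rightarrow> (real \<times> real \<Rightarrow> real) \<Rightarrow> bool" where
  "incidence_hyp F f \<longleftrightarrow>
     C2_on F quadrant \<and> C2_on f quadrant \<and>
     (\<forall>S I. (S, I) \<in> quadrant \<longrightarrow> F (S, I) = I * f (S, I) \<and> F (S, I) \<ge> 0 \<and> f (S, I) \<ge> 0) \<and>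
     (\<forall>I \<ge> 0. F (0, I) = 0) \<and> (\<forall>S \<ge> 0. F (S, 0) = 0) \<and>
     (\<forall>S I. (S, I) \<in> quadrant \<longrightarrow> pdS f S I > 0 \<and> pdI f S I \<le> 0) \<and>
     (\<forall>S > 0. \<exists>L > 0. ((\<lambda>I. F (S, I) / I) \<longlongrightarrow> L) (at_right 0))"

definition field :: "(real \<times> real \<Rightarrow> real) \<Rightarrow> (real \<times> real \<Rightarrow> real) \<Rightarrow>
    real \<Rightarrow> real \<Rightarrow> real \<Rightarrow> real \<Rightarrow> real \<Rightarrow> real \<Rightarrow> real \<Rightarrow> real \<Rightarrow> state \<Rightarrow> state" where
  "field F1 F2 Lam mu r k gamma1 gamma2 v1 v2 = (\<lambda>(S, V1, I1, I2).
     (let lam = r + mu; a1 = gamma1 + v1 + mu; a2 = gamma2 + v2 + mu in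
      (Lam - F1 (S, I1) - F2 (S, I2) - lam * S,
       r * S - (mu + k * I2) * V1,
       F1 (S, I1) - a1 * I1,
       F2 (S, I2) + k * I2 * V1 - a2 * I2)))"

definition is_solution :: "(state \<Rightarrow> state) \<Rightarrow> state set \<Rightarrow> (real \<Rightarrow> state) \<Rightarrow> bool" where
  "is_solution G D x \<longleftrightarrow>
     (\<forall>t \<ge> 0. x t \<in> D \<and> (x has_vector_derivative G (x t)) (at t within {0..}))"

definition lyap_stable :: "(state \<Rightarrow> state) \<Rightarrow> state set \<Rightarrow> state \<Rightarrow> bool" where
  "lyap_stable G D e \<longleftrightarrow>
     (\<forall>\<epsilon> > 0. \<exists>\<delta> > 0. \<forall>x. is_solution G D x \<and> dist (x 0) e < \<delta> \<longrightarrow>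
        (\<forall>t \<ge> 0. dist (x t) e < \<epsilon>))"

definition loc_asym_stable :: "(state \<Rightarrow> state) \<Rightarrow> state set \<Rightarrow> state \<Rightarrow> bool" where
  "loc_asym_stable G D e \<longleftrightarrow> lyap_stable G D e \<and>
     (\<exists>\<eta> > 0. \<forall>x. is_solution G D x \<and> dist (x 0) e < \<eta> \<longrightarrow> (x \<longlongrightarrow> e) at_top)"

definition unstable :: "(state \<Rightarrow> state) \<Rightarrow> state set \<Rightarrow> state \<Rightarrow> bool" where
  "unstable G D e \<longleftrightarrow> \<not> lyap_stable G D e"

end

theory Submission
  imports Defs
begin

lemma stay_nonneg:
  fixes \<phi> :: "real \<Rightarrow> real"
  assumes cont: "continuous_on {0..} \<phi>" and p0: "\<phi> 0 \<ge> 0"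
   and der: "\<And>t. t > 0 \<Longrightarrow> \<phi> t < 0 \<Longrightarrow> \<exists>y. (\<phi> has_real_derivative y) (at t) \<and> y \<ge> 0"
   and t: "t \<ge> 0"
  shows "\<phi> t \<ge> 0"
proof (rule ccontr)
  assume neg: "\<not> \<phi> t \<ge> 0"
  define A where "A = {0..t} \<inter> \<phi> -` {0..}"
  have cA: "closed A" unfolding A_def
    by (rule continuous_closed_preimage) (auto intro: continuous_on_subset[OF cont])
  have "0 \<in> A" using p0 t by (auto simp: A_def)
  have bA: "bdd_above A" by (auto simp: A_def bdd_above_def)
  define s where "s = Sup A"
  have sA: "s \<in> A" unfolding s_def using closed_contains_Sup[of A] cA \<open>0 \<in> A\<close> bA by auto
  have sle: "s \<le> t" "0 \<le> s" "\<phi> s \<ge> 0" using sA by (auto simp: A_def)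
  have "s \<noteq> t" using neg sle by auto
  hence slt: "s < t" using sle by auto
  have after: "\<phi> x < 0" if "s < x" "x \<le> t" for x
  proof (rule ccontr)
    assume "\<not> \<phi> x < 0"
    hence "x \<in> A" using that sle by (auto simp: A_def)
    hence "x \<le> s" unfolding s_def using bA by (rule cSup_upper)
    thus False using that by auto
  qed
  have "\<phi> s \<le> \<phi> t"
  proof (rule DERIV_nonneg_imp_increasing_open[of s t \<phi>])
    show "s \<le> t" using slt by simp
    show "continuous_on {s..t} \<phi>" by (rule continuous_on_subset[OF cont]) (use sle in auto)
    fix x assume "s < x" "x < t"
    thus "\<exists>y. (\<phi> has_real_derivative y) (at x) \<and> y \<ge> 0"
      using der[of x] after[of x] sle by auto
  qed
  thus False using neg sle by auto
qed

lemma trap_mono: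
  fixes \<phi> :: "real \<Rightarrow> real"
  assumes cont: "continuous_on {0..} \<phi>"
   and der: "\<And>t. 0 < t \<Longrightarrow> t < T \<Longrightarrow> \<exists>y. (\<phi> has_real_derivative y) (at t) \<and> y \<le> -\<kappa> * \<phi> t"
   and T: "T \<ge> 0"
  shows "\<phi> T \<le> \<phi> 0 * exp (-\<kappa>*T)"
proof -
  define h where "h = (\<lambda>s. \<phi> s * exp (\<kappa> * s))"
  have "h T \<le> h 0"
  proof (rule DERIV_nonpos_imp_decreasing_open[of 0 T h])
    show "0 \<le> T" by fact
    show "continuous_on {0..T} h" unfolding h_def
      by (intro continuous_intros continuous_on_subset[OF cont]) auto
    fix x assume x: "0 < x" "x < T"
    then obtain y where y: "(\<phi> has_real_derivative y) (at x)" "y \<le> -\<kappa> * \<phi> x" using der by blast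
    have e: "((\<lambda>s. exp (\<kappa> * s)) has_real_derivative exp (\<kappa> * x) * \<kappa>) (at x)"
      by (auto intro!: derivative_eq_intros)
    have "(h has_real_derivative ((y + \<kappa> * \<phi> x) * exp (\<kappa> * x))) (at x)"
      unfolding h_def using DERIV_mult[OF y(1) e] by (simp add: algebra_simps)
    moreover have "(y + \<kappa> * \<phi> x) * exp (\<kappa> * x) \<le> 0"
      using y(2) by (intro mult_nonpos_nonneg) auto
    ultimately show "\<exists>y. (h has_real_derivative y) (at x) \<and> y \<le> 0" by auto
  qed
  hence "\<phi> T * exp (\<kappa> * T) \<le> \<phi> 0" by (simp add: h_def)
  hence "\<phi> T * exp (\<kappa> * T) * exp (-\<kappa>*T) \<le> \<phi> 0 * exp (-\<kappa>*T)"
    by (intro mult_right_mono) auto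
  thus ?thesis by (simp add: mult.assoc flip: exp_add)
qed

lemma trap:
  fixes \<phi> :: "real \<Rightarrow> real" and P :: "real \<Rightarrow> bool"
  assumes cont: "continuous_on {0..} \<phi>"
   and der: "\<And>t. t > 0 \<Longrightarrow> P t \<Longrightarrow> \<exists>y. (\<phi> has_real_derivative y) (at t) \<and> y \<le> -\<kappa> * \<phi> t"
   and inN: "\<And>t. t \<ge> 0 \<Longrightarrow> \<phi> t \<le> \<omega> \<Longrightarrow> P t"
   and bnd: "\<And>t. t \<ge> 0 \<Longrightarrow> \<phi> 0 * exp(-\<kappa>*t) < \<omega>"
   and t: "t \<ge> 0"
  shows "\<phi> t \<le> \<phi> 0 * exp (-\<kappa>*t) \<and> P t"
proof -
  have all: "\<phi> t1 < \<omega>" if t1: "t1 \<ge> 0" for t1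
  proof (rule ccontr)
    assume neg: "\<not> \<phi> t1 < \<omega>"
    define A where "A = {0..t1} \<inter> \<phi> -` {\<omega>..}"
    have cA: "closed A" unfolding A_def
      by (rule continuous_closed_preimage) (auto intro: continuous_on_subset[OF cont])
    have "t1 \<in> A" using neg t1 by (auto simp: A_def)
    have bA: "bdd_below A" by (auto simp: A_def bdd_below_def)
    define s where "s = Inf A"
    have sA: "s \<in> A" unfolding s_def using closed_contains_Inf[of A] cA \<open>t1 \<in> A\<close> bA by auto
    have sle: "0 \<le> s" "\<phi> s \<ge> \<omega>" using sA by (auto simp: A_def)
    have before: "\<phi> x < \<omega>" if "0 \<le> x" "x < s" for x
    proof (rule ccontr)
      assume "\<not> \<phi> x < \<omega>"
      hence "x \<in> A" using that sA by (auto simp: A_def)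
      hence "s \<le> x" unfolding s_def using bA by (rule cInf_lower)
      thus False using that by auto
    qed
    have "\<phi> s \<le> \<phi> 0 * exp (- \<kappa> * s)"
    proof (rule trap_mono[OF cont _ sle(1)])
      fix x assume x: "0 < x" "x < s"
      have "P x" using inN[of x] before[of x] x by auto
      thus "\<exists>y. (\<phi> has_real_derivative y) (at x) \<and> y \<le> - \<kappa> * \<phi> x" using der[of x] x by auto
    qed
    thus False using bnd[OF sle(1)] sle by auto
  qed
  show ?thesis
  proof
    show "\<phi> t \<le> \<phi> 0 * exp (-\<kappa>*t)"
    proof (rule trap_mono[OF cont _ t])
      fix x assume x: "0 < x" "x < t"
      have "P x" using inN[of x] all[of x] x by auto
      thus "\<exists>y. (\<phi> has_real_derivative y) (at x) \<and> y \<le> - \<kappa> * \<phi> x" using der[of x] x by auto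
    qed
    show "P t" using inN[OF t] all[OF t] by auto
  qed
qed

lemma cont_int_max:
  fixes g :: "real \<Rightarrow> 'a::banach"
  assumes g: "continuous_on UNIV g"
  shows "continuous_on UNIV (\<lambda>t. integral {0..max t 0} g)"
proof (rule continuous_at_imp_continuous_on, intro ballI)
  fix t0 :: real
  define b where "b = \<bar>t0\<bar> + 1"
  have b: "b > 0" by (simp add: b_def)
  have c1: "continuous_on {0..b} (\<lambda>u. integral {0..u} g)"
    by (rule indefinite_integral_continuous_1, rule integrable_continuous_real)
       (rule continuous_on_subset[OF g], auto)
  have c2: "continuous_on {-b..b} (\<lambda>t. max t 0)" by (intro continuous_intros)
  have "continuous_on {-b..b} ((\<lambda>u. integral {0..u} g) \<circ> (\<lambda>t. max t 0))"
    by (rule continuous_on_compose[OF c2 continuous_on_subset[OF c1]]) (use b in auto)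
  moreover have "t0 \<in> interior {-b..b}" by (simp add: b_def) arith
  ultimately have "continuous (at t0) ((\<lambda>u. integral {0..u} g) \<circ> (\<lambda>t. max t 0))"
    by (rule continuous_on_interior)
  thus "isCont (\<lambda>t. integral {0..max t 0} g) t0" by (simp add: o_def)
qed

lemma exp_int:
  fixes L d \<tau> :: real
  assumes L: "L > 0" and \<tau>: "\<tau> \<ge> 0"
  shows "((\<lambda>s. L * d * exp (2*L* s)) has_integral (d/2 * exp (2*L*\<tau>) - d/2)) {0..\<tau>}"
proof -
  have "((\<lambda>s. L * d * exp (2*L* s)) has_integral ((\<lambda>s. d/2 * exp (2*L* s)) \<tau> - (\<lambda>s. d/2 * exp (2*L* s)) 0)) {0..\<tau>}"
  proof (rule fundamental_theorem_of_calculus[OF \<tau>])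
    fix x :: real assume "x \<in> {0..\<tau>}"
    have "((\<lambda>s. d/2 * exp (2*L* s)) has_real_derivative (d/2 * (exp (2*L*x) * (2*L)))) (at x within {0..\<tau>})"
      by (auto intro!: derivative_eq_intros)
    moreover have "d/2 * (exp (2*L*x) * (2*L)) = L * d * exp (2*L*x)" by simp
    ultimately have "((\<lambda>s. d/2 * exp (2*L* s)) has_real_derivative L * d * exp (2*L*x)) (at x within {0..\<tau>})"
      by metis
    thus "((\<lambda>s. d/2 * exp (2*L* s)) has_vector_derivative L * d * exp (2*L*x)) (at x within {0..\<tau>})"
      by (simp only: has_real_derivative_iff_has_vector_derivative)
  qed
  thus ?thesis by simp
qed

lemma global_exist:
  fixes H :: "state \<Rightarrow> state"
  assumes lip: "\<And>x y. norm (H x - H y) \<le> L * norm (x - y)" and L: "L > 0"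
   and bnd: "\<And>x. norm (H x) \<le> B"
  shows "\<exists>x. continuous_on UNIV x \<and> x 0 = x0 \<and> (\<forall>t\<ge>0. (x has_vector_derivative H (x t)) (at t within {0..}))"
proof -
  have B: "B \<ge> 0" using bnd[of 0] norm_ge_zero order_trans by blast
  have Hc: "continuous_on UNIV H"
    by (rule lipschitz_on_continuous_on[of L]) (use lip L in \<open>auto simp: lipschitz_on_def dist_norm\<close>)
  define g where "g = (\<lambda>(y::real \<Rightarrow>\<^sub>C state) s. H (exp (2*L* s) *\<^sub>R apply_bcontfun y s))"
  have gc: "continuous_on UNIV (g y)" for y
    unfolding g_def by (intro continuous_on_compose2[OF Hc] continuous_intros) auto
  define P where "P = (\<lambda>y t. exp (-(2*L) * max t 0) *\<^sub>R (x0 + integral {0..max t 0} (g y)))"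
  have Pb: "P y \<in> bcontfun" for y
  proof (rule bcontfun_normI)
    show "continuous_on UNIV (P y)" unfolding P_def
      by (intro continuous_intros cont_int_max gc)
    fix t :: real
    define \<tau> where "\<tau> = max t 0"
    have \<tau>: "\<tau> \<ge> 0" by (simp add: \<tau>_def)
    have i: "norm (integral {0..\<tau>} (g y)) \<le> B * (\<tau> - 0)"
      by (rule integral_bound[OF \<tau>]) (use gc bnd in \<open>auto simp: g_def intro: continuous_on_subset\<close>)
    have e1: "exp (-(2*L) * \<tau>) \<le> 1" using L \<tau> by auto
    have e2: "exp (-(2*L) * \<tau>) * \<tau> \<le> 1 / (2*L)"
    proof -
      have "1 + 2*L*\<tau> \<le> exp (2*L*\<tau>)" by (rule exp_ge_add_one_self)
      hence "2*L*\<tau> \<le> exp (2*L*\<tau>)" by linarith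
      hence "\<tau> \<le> exp (2*L*\<tau>) / (2*L)" using L by (simp add: field_simps)
      hence "exp (-(2*L) * \<tau>) * \<tau> \<le> exp (-(2*L) * \<tau>) * (exp (2*L*\<tau>) / (2*L))"
        by (intro mult_left_mono) auto
      also have "\<dots> = 1 / (2*L)" by (simp add: exp_minus field_simps)
      finally show ?thesis .
    qed
    have "norm (P y t) = exp (-(2*L) * \<tau>) * norm (x0 + integral {0..\<tau>} (g y))"
      by (simp add: P_def \<tau>_def)
    also have "\<dots> \<le> exp (-(2*L) * \<tau>) * (norm x0 + B * \<tau>)"
      by (intro mult_left_mono) (use i norm_triangle_ineq[of x0 "integral {0..\<tau>} (g y)"] in auto)
    also have "\<dots> = exp (-(2*L) * \<tau>) * norm x0 + B * (exp (-(2*L) * \<tau>) * \<tau>)"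
      by (simp add: algebra_simps)
    also have "\<dots> \<le> 1 * norm x0 + B * (1 / (2*L))"
      by (intro add_mono mult_right_mono mult_left_mono e1 e2 B) auto
    finally show "norm (P y t) \<le> norm x0 + B / (2*L)" by simp
  qed
  define \<Phi> where "\<Phi> = (\<lambda>y. Bcontfun (P y))"
  have \<Phi>a: "apply_bcontfun (\<Phi> y) = P y" for y
    unfolding \<Phi>_def using Pb by (simp add: Bcontfun_inverse)
  have contr: "dist (\<Phi> y1) (\<Phi> y2) \<le> 1/2 * dist y1 y2" for y1 y2
  proof (rule dist_bound)
    fix t :: real
    define \<tau> where "\<tau> = max t 0"
    have \<tau>: "\<tau> \<ge> 0" by (simp add: \<tau>_def)
    define d where "d = dist y1 y2"
    have d: "d \<ge> 0" by (simp add: d_def)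
    have int1: "g y integrable_on {0..\<tau>}" for y
      by (rule integrable_continuous_real) (use gc in \<open>auto intro: continuous_on_subset\<close>)
    have "norm (integral {0..\<tau>} (\<lambda>s. g y1 s - g y2 s)) \<le> integral {0..\<tau>} (\<lambda>s. L * d * exp (2*L* s))"
    proof (rule integral_norm_bound_integral)
      show "(\<lambda>s. g y1 s - g y2 s) integrable_on {0..\<tau>}" using int1 by (intro integrable_diff) auto
      show "(\<lambda>s. L * d * exp (2*L* s)) integrable_on {0..\<tau>}" using exp_int[OF L \<tau>] by blast
      fix s assume "s \<in> {0..\<tau>}"
      have "norm (g y1 s - g y2 s) \<le> L * norm (exp (2*L* s) *\<^sub>R apply_bcontfun y1 s - exp (2*L* s) *\<^sub>R apply_bcontfun y2 s)"
        unfolding g_def using lip by simp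
      also have "\<dots> = L * (exp (2*L* s) * dist (apply_bcontfun y1 s) (apply_bcontfun y2 s))"
        by (simp add: dist_norm flip: scaleR_diff_right)
      also have "\<dots> \<le> L * (exp (2*L* s) * d)"
        unfolding d_def using L by (intro mult_left_mono dist_bounded) auto
      finally show "norm (g y1 s - g y2 s) \<le> L * d * exp (2*L* s)" by (simp add: algebra_simps)
    qed
    also have "\<dots> = d/2 * exp (2*L*\<tau>) - d/2" using exp_int[OF L \<tau>] by (rule integral_unique)
    finally have I: "norm (integral {0..\<tau>} (g y1) - integral {0..\<tau>} (g y2)) \<le> d/2 * exp (2*L*\<tau>) - d/2"
      using int1 by (simp add: integral_diff)
    have "dist (apply_bcontfun (\<Phi> y1) t) (apply_bcontfun (\<Phi> y2) t)
        = exp (-(2*L) * \<tau>) * norm (integral {0..\<tau>} (g y1) - integral {0..\<tau>} (g y2))"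
      by (simp add: \<Phi>a P_def \<tau>_def dist_norm flip: scaleR_diff_right)
    also have "\<dots> \<le> exp (-(2*L) * \<tau>) * (d/2 * exp (2*L*\<tau>) - d/2)"
      by (intro mult_left_mono I) auto
    also have "\<dots> = d/2 - d/2 * exp (-(2*L) * \<tau>)"
      by (simp add: algebra_simps flip: exp_add)
    also have "\<dots> \<le> d/2" using d by simp
    finally show "dist (apply_bcontfun (\<Phi> y1) t) (apply_bcontfun (\<Phi> y2) t) \<le> 1/2 * dist y1 y2"
      by (simp add: d_def)
  qed
  obtain y where y: "\<Phi> y = y"
    using banach_fix_type[of "1/2" \<Phi>] contr by auto
  define x where "x = (\<lambda>t. exp (2*L*t) *\<^sub>R apply_bcontfun y t)"
  have xc: "continuous_on UNIV x" unfolding x_def by (intro continuous_intros) auto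
  have Hxc: "continuous_on UNIV (\<lambda>s. H (x s))" by (intro continuous_on_compose2[OF Hc xc]) auto
  have gx: "g y = (\<lambda>s. H (x s))" by (simp add: g_def x_def fun_eq_iff)
  have xint: "x t = x0 + integral {0..t} (\<lambda>s. H (x s))" if t: "t \<ge> 0" for t
  proof -
    have "apply_bcontfun y t = P y t" using \<Phi>a[of y] y by simp
    hence "x t = exp (2*L*t) *\<^sub>R (exp (-(2*L) * t) *\<^sub>R (x0 + integral {0..t} (g y)))"
      using t by (simp add: x_def P_def)
    also have "\<dots> = x0 + integral {0..t} (g y)" by (simp flip: exp_add)
    finally show ?thesis by (simp add: gx)
  qed
  have der: "(x has_vector_derivative H (x t)) (at t within {0..})" if t: "t \<ge> 0" for t
  proof -
    define b where "b = t + 1"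
    have "((\<lambda>u. integral {0..u} (\<lambda>s. H (x s))) has_vector_derivative H (x t)) (at t within {0..b})"
      by (rule integral_has_vector_derivative) (use Hxc t in \<open>auto simp: b_def intro: continuous_on_subset\<close>)
    hence "((\<lambda>u. x0 + integral {0..u} (\<lambda>s. H (x s))) has_vector_derivative H (x t)) (at t within {0..b})"
      by (rule has_vector_derivative_eq_rhs[OF has_vector_derivative_add[OF has_vector_derivative_const]]) simp
    hence "(x has_vector_derivative H (x t)) (at t within {0..b})"
      by (rule has_vector_derivative_transform[rotated 2]) (use t xint in \<open>auto simp: b_def\<close>)
    moreover have "at t within {0..b} = at t within {0..}"
      by (rule at_within_nhd[of _ "{..<b}"]) (auto simp: b_def)
    ultimately show ?thesis by simp
  qed
  have "x 0 = x0" using xint[of 0] by simp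
  thus ?thesis using xc der by blast
qed

lemma field_eq: "field F1 F2 Lam mu r k gamma1 gamma2 v1 v2 (S, V, I, J) =
  (Lam - F1 (S, I) - F2 (S, J) - (r + mu) * S,
   r * S - (mu + k * J) * V,
   F1 (S, I) - (gamma1 + v1 + mu) * I,
   F2 (S, J) + k * J * V - (gamma2 + v2 + mu) * J)"
  by (simp add: field_def Let_def)

lemma C2_deriv:
  assumes "C2_on F A"
  shows "\<exists>U F'. open U \<and> A \<subseteq> U \<and> (\<forall>x\<in>U. (F has_derivative blinfun_apply (F' x)) (at x)) \<and> continuous_on U F'"
proof -
  obtain U F' F'' where U: "open U" "A \<subseteq> U" "\<forall>x\<in>U. (F has_derivative blinfun_apply (F' x)) (at x)"
    "\<forall>x\<in>U. (F' has_derivative blinfun_apply (F'' x)) (at x)"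
    using assms unfolding C2_on_def by blast
  have "continuous_on U F'"
    using U(4) by (intro continuous_at_imp_continuous_on) (auto intro: has_derivative_continuous)
  thus ?thesis using U by blast
qed

lemma C2_lip_box:
  assumes "C2_on F quadrant" "M \<ge> 0"
  shows "\<exists>K\<ge>0. \<forall>p\<in>{0..M}\<times>{0..M}. \<forall>q\<in>{0..M}\<times>{0..M}. \<bar>F p - F q\<bar> \<le> K * norm (p - q)"
proof -
  obtain U F' where U: "open U" "quadrant \<subseteq> U" "\<forall>x\<in>U. (F has_derivative blinfun_apply (F' x)) (at x)"
     "continuous_on U F'" using C2_deriv[OF assms(1)] by blast
  define Bx where "Bx = ({0..M}\<times>{0..M} :: (real\<times>real) set)"
  have sub: "Bx \<subseteq> U" using U(2) by (auto simp: Bx_def quadrant_def)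
  have "compact (F' ` Bx)"
    by (rule compact_continuous_image) (use continuous_on_subset[OF U(4) sub] in \<open>auto simp: Bx_def intro: compact_Times\<close>)
  then obtain K where K: "\<forall>z\<in>F' ` Bx. norm z \<le> K" using compact_imp_bounded bounded_iff by metis
  define K' where "K' = max K 0"
  have "\<bar>F p - F q\<bar> \<le> K' * norm (p - q)" if "p \<in> Bx" "q \<in> Bx" for p q
  proof -
    have "norm (F p - F q) \<le> K' * norm (p - q)"
    proof (rule differentiable_bound[where f' = "\<lambda>x. blinfun_apply (F' x)"])
      show "convex Bx" by (simp add: Bx_def convex_Times)
      fix x assume x: "x \<in> Bx"
      show "(F has_derivative blinfun_apply (F' x)) (at x within Bx)"
        using U(3) sub x by (auto intro: has_derivative_at_withinI)
      show "onorm (blinfun_apply (F' x)) \<le> K'"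
        using K x by (force simp: norm_blinfun.rep_eq[symmetric] K'_def)
    qed (use that in auto)
    thus ?thesis by simp
  qed
  moreover have "K' \<ge> 0" by (simp add: K'_def)
  ultimately show ?thesis unfolding Bx_def by blast
qed

lemma norm2_le: "norm ((a, b) :: real \<times> real) \<le> \<bar>a\<bar> + \<bar>b\<bar>"
  by (rule order_trans[OF norm_Pair_le]) simp

lemma norm4_le: "norm ((a, b, c, d) :: state) \<le> \<bar>a\<bar> + \<bar>b\<bar> + \<bar>c\<bar> + \<bar>d\<bar>"
proof -
  have "norm ((a, b, c, d) :: state) \<le> norm a + norm (b, c, d)" by (rule norm_Pair_le)
  also have "norm (b, c, d) \<le> norm b + norm (c, d)" by (rule norm_Pair_le)
  also have "norm (c, d) \<le> norm c + norm d" by (rule norm_Pair_le)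
  finally show ?thesis by simp
qed

lemma comp_le:
  fixes x :: state
  shows "\<bar>fst x\<bar> \<le> norm x" "\<bar>fst (snd x)\<bar> \<le> norm x" "\<bar>fst (snd (snd x))\<bar> \<le> norm x"
    "\<bar>snd (snd (snd x))\<bar> \<le> norm x"
proof -
  obtain a b c d where x: "x = (a, b, c, d)" by (cases x) auto
  have 1: "norm a \<le> norm x" "norm (b,c,d) \<le> norm x" unfolding x by (rule norm_fst_le, rule norm_snd_le)
  have 2: "norm b \<le> norm (b,c,d)" "norm (c,d) \<le> norm (b,c,d)" by (rule norm_fst_le, rule norm_snd_le)
  have 3: "norm c \<le> norm (c,d)" "norm d \<le> norm (c,d)" by (rule norm_fst_le, rule norm_snd_le)
  show "\<bar>fst x\<bar> \<le> norm x" "\<bar>fst (snd x)\<bar> \<le> norm x" "\<bar>fst (snd (snd x))\<bar> \<le> norm x"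
    "\<bar>snd (snd (snd x))\<bar> \<le> norm x" using 1 2 3 by (auto simp: x)
qed

lemma comp_le4:
  fixes a b c d a' b' c' d' :: real
  shows "\<bar>a - a'\<bar> \<le> norm ((a, b, c, d) - (a', b', c', d') :: state)"
  "\<bar>b - b'\<bar> \<le> norm ((a, b, c, d) - (a', b', c', d') :: state)"
  "\<bar>c - c'\<bar> \<le> norm ((a, b, c, d) - (a', b', c', d') :: state)"
  "\<bar>d - d'\<bar> \<le> norm ((a, b, c, d) - (a', b', c', d') :: state)"
  using comp_le[of "(a, b, c, d) - (a', b', c', d')"] by auto

definition cl :: "real \<Rightarrow> real \<Rightarrow> real" where "cl M y = max 0 (min M y)"
definition Cl :: "real \<Rightarrow> state \<Rightarrow> state" where
  "Cl M = (\<lambda>(S, V, I, J). (cl M S, cl M V, cl M I, cl M J))"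

lemma cl_props: "M \<ge> 0 \<Longrightarrow> 0 \<le> cl M y" "M \<ge> 0 \<Longrightarrow> cl M y \<le> M" "\<bar>cl M y - cl M y'\<bar> \<le> \<bar>y - y'\<bar>"
  "y \<le> 0 \<Longrightarrow> M \<ge> 0 \<Longrightarrow> cl M y = 0" "0 \<le> y \<Longrightarrow> y \<le> M \<Longrightarrow> cl M y = y"
  "M \<ge> 0 \<Longrightarrow> cl M (cl M y) = cl M y"
  by (auto simp: cl_def)

lemma bil: "\<bar>(a::real) * b - c * d\<bar> \<le> \<bar>a\<bar> * \<bar>b - d\<bar> + \<bar>d\<bar> * \<bar>a - c\<bar>"
proof -
  have "a * b - c * d = a * (b - d) + d * (a - c)" by (simp add: algebra_simps)
  thus ?thesis by (metis abs_mult abs_triangle_ineq)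
qed

lemma triA: "\<bar>-(x::real) - y - z\<bar> \<le> \<bar>x\<bar> + \<bar>y\<bar> + \<bar>z\<bar>" by linarith
lemma triB: "\<bar>(x::real) - y - z\<bar> \<le> \<bar>x\<bar> + \<bar>y\<bar> + \<bar>z\<bar>" by linarith
lemma triC: "\<bar>(x::real) + y - z\<bar> \<le> \<bar>x\<bar> + \<bar>y\<bar> + \<bar>z\<bar>" by linarith

lemma field_Cl_lip:
  assumes H1: "incidence_hyp F1 f1" and H2: "incidence_hyp F2 f2" and M: "M \<ge> 0"
  shows "\<exists>L>0. \<forall>x y. norm (field F1 F2 Lam mu r k gamma1 gamma2 v1 v2 (Cl M x)
             - field F1 F2 Lam mu r k gamma1 gamma2 v1 v2 (Cl M y)) \<le> L * norm (x - y)"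
proof -
  obtain K1 where K1: "K1 \<ge> 0" "\<forall>p\<in>{0..M}\<times>{0..M}. \<forall>q\<in>{0..M}\<times>{0..M}. \<bar>F1 p - F1 q\<bar> \<le> K1 * norm (p - q)"
    using C2_lip_box[OF _ M, of F1] H1 unfolding incidence_hyp_def by blast
  obtain K2 where K2: "K2 \<ge> 0" "\<forall>p\<in>{0..M}\<times>{0..M}. \<forall>q\<in>{0..M}\<times>{0..M}. \<bar>F2 p - F2 q\<bar> \<le> K2 * norm (p - q)"
    using C2_lip_box[OF _ M, of F2] H2 unfolding incidence_hyp_def by blast
  define L where "L = 4*K1 + 4*K2 + \<bar>r+mu\<bar> + \<bar>r\<bar> + \<bar>mu\<bar> + 4*\<bar>k\<bar>*M + \<bar>gamma1 + v1 + mu\<bar> + \<bar>gamma2 + v2 + mu\<bar> + 1"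
  have "0 \<le> \<bar>k\<bar> * M" using M by simp
  hence L: "L > 0" using K1(1) K2(1) unfolding L_def by linarith
  have "norm (field F1 F2 Lam mu r k gamma1 gamma2 v1 v2 (Cl M x)
             - field F1 F2 Lam mu r k gamma1 gamma2 v1 v2 (Cl M y)) \<le> L * norm (x - y)" for x y
  proof -
    obtain S V I J where x: "x = (S, V, I, J)" by (cases x) auto
    obtain S' V' I' J' where y: "y = (S', V', I', J')" by (cases y) auto
    define n where "n = norm (x - y)"
    have n: "n \<ge> 0" by (simp add: n_def)
    define a where "a = cl M S" define b where "b = cl M V" define c where "c = cl M I" define d where "d = cl M J"
    define a' where "a' = cl M S'" define b' where "b' = cl M V'" define c' where "c' = cl M I'" define d' where "d' = cl M J'"
    have dS: "\<bar>a - a'\<bar> \<le> n" using cl_props(3)[of M S S'] comp_le(1)[of "x - y"] by (simp add: a_def a'_def n_def x y)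
    have dV: "\<bar>b - b'\<bar> \<le> n" using cl_props(3)[of M V V'] comp_le(2)[of "x - y"] by (simp add: b_def b'_def n_def x y)
    have dI: "\<bar>c - c'\<bar> \<le> n" using cl_props(3)[of M I I'] comp_le(3)[of "x - y"] by (simp add: c_def c'_def n_def x y)
    have dJ: "\<bar>d - d'\<bar> \<le> n" using cl_props(3)[of M J J'] comp_le(4)[of "x - y"] by (simp add: d_def d'_def n_def x y)
    have inb: "a \<in> {0..M}" "b \<in> {0..M}" "c \<in> {0..M}" "d \<in> {0..M}" "a' \<in> {0..M}" "b' \<in> {0..M}" "c' \<in> {0..M}" "d' \<in> {0..M}"
      using cl_props(1,2)[OF M] by (auto simp: a_def b_def c_def d_def a'_def b'_def c'_def d'_def)
    have f1: "\<bar>F1 (a, c) - F1 (a', c')\<bar> \<le> 2*K1*n"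
    proof -
      have "\<bar>F1 (a, c) - F1 (a', c')\<bar> \<le> K1 * norm ((a, c) - (a', c'))" using K1(2) inb by auto
      also have "norm ((a, c) - (a', c')) \<le> \<bar>a - a'\<bar> + \<bar>c - c'\<bar>" using norm2_le[of "a - a'" "c - c'"] by simp
      hence "K1 * norm ((a, c) - (a', c')) \<le> K1 * (2*n)" using dS dI K1(1) by (intro mult_left_mono) auto
      finally show ?thesis by simp
    qed
    have f2: "\<bar>F2 (a, d) - F2 (a', d')\<bar> \<le> 2*K2*n"
    proof -
      have "\<bar>F2 (a, d) - F2 (a', d')\<bar> \<le> K2 * norm ((a, d) - (a', d'))" using K2(2) inb by auto
      also have "norm ((a, d) - (a', d')) \<le> \<bar>a - a'\<bar> + \<bar>d - d'\<bar>" using norm2_le[of "a - a'" "d - d'"] by simp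
      hence "K2 * norm ((a, d) - (a', d')) \<le> K2 * (2*n)" using dS dJ K2(1) by (intro mult_left_mono) auto
      finally show ?thesis by simp
    qed
    have bl: "\<bar>d * b - d' * b'\<bar> \<le> 2*M*n"
    proof -
      have "\<bar>d * b - d' * b'\<bar> \<le> \<bar>d\<bar> * \<bar>b - b'\<bar> + \<bar>b'\<bar> * \<bar>d - d'\<bar>" by (rule bil)
      also have "\<dots> \<le> M * n + M * n" using inb dV dJ by (intro add_mono mult_mono) auto
      finally show ?thesis by simp
    qed
    have p1: "\<bar>(r+mu) * (a - a')\<bar> \<le> \<bar>r+mu\<bar> * n" "\<bar>r * (a - a')\<bar> \<le> \<bar>r\<bar> * n" "\<bar>mu * (b - b')\<bar> \<le> \<bar>mu\<bar> * n"
      "\<bar>k * (d * b - d' * b')\<bar> \<le> \<bar>k\<bar> * (2*M*n)"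
      "\<bar>(gamma1 + v1 + mu) * (c - c')\<bar> \<le> \<bar>gamma1 + v1 + mu\<bar> * n"
      "\<bar>(gamma2 + v2 + mu) * (d - d')\<bar> \<le> \<bar>gamma2 + v2 + mu\<bar> * n"
      using dS dV dI dJ bl by (auto simp: abs_mult intro!: mult_left_mono)
    have Cx: "Cl M x = (a, b, c, d)" "Cl M y = (a', b', c', d')"
      by (simp_all add: Cl_def x y a_def b_def c_def d_def a'_def b'_def c'_def d'_def)
    let ?G = "field F1 F2 Lam mu r k gamma1 gamma2 v1 v2"
    have "?G (Cl M x) - ?G (Cl M y) =
      (-(F1 (a, c) - F1 (a', c')) - (F2 (a, d) - F2 (a', d')) - (r+mu) * (a - a'),
       r * (a - a') - mu * (b - b') - k * (d * b - d' * b'),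
       (F1 (a, c) - F1 (a', c')) - (gamma1 + v1 + mu) * (c - c'),
       (F2 (a, d) - F2 (a', d')) + k * (d * b - d' * b') - (gamma2 + v2 + mu) * (d - d'))"
      unfolding Cx field_eq by (simp add: algebra_simps)
    hence "norm (?G (Cl M x) - ?G (Cl M y)) \<le>
       \<bar>-(F1 (a, c) - F1 (a', c')) - (F2 (a, d) - F2 (a', d')) - (r+mu) * (a - a')\<bar> +
       \<bar>r * (a - a') - mu * (b - b') - k * (d * b - d' * b')\<bar> +
       \<bar>(F1 (a, c) - F1 (a', c')) - (gamma1 + v1 + mu) * (c - c')\<bar> +
       \<bar>(F2 (a, d) - F2 (a', d')) + k * (d * b - d' * b') - (gamma2 + v2 + mu) * (d - d')\<bar>"
      by (simp only: norm4_le)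
    also have "\<dots> \<le> (2*K1*n + 2*K2*n + \<bar>r+mu\<bar> * n) + (\<bar>r\<bar> * n + \<bar>mu\<bar> * n + \<bar>k\<bar> * (2*M*n))
        + (2*K1*n + \<bar>gamma1 + v1 + mu\<bar> * n) + (2*K2*n + \<bar>k\<bar> * (2*M*n) + \<bar>gamma2 + v2 + mu\<bar> * n)"
    proof (intro add_mono)
      show "\<bar>-(F1 (a, c) - F1 (a', c')) - (F2 (a, d) - F2 (a', d')) - (r+mu) * (a - a')\<bar> \<le> 2*K1*n + 2*K2*n + \<bar>r+mu\<bar> * n"
        by (rule order_trans[OF triA]) (intro add_mono f1 f2 p1(1))
      show "\<bar>r * (a - a') - mu * (b - b') - k * (d * b - d' * b')\<bar> \<le> \<bar>r\<bar> * n + \<bar>mu\<bar> * n + \<bar>k\<bar> * (2*M*n)"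
        by (rule order_trans[OF triB]) (intro add_mono p1(2,3,4))
      show "\<bar>(F1 (a, c) - F1 (a', c')) - (gamma1 + v1 + mu) * (c - c')\<bar> \<le> 2*K1*n + \<bar>gamma1 + v1 + mu\<bar> * n"
        by (rule order_trans[OF abs_triangle_ineq4]) (intro add_mono f1 p1(5))
      show "\<bar>(F2 (a, d) - F2 (a', d')) + k * (d * b - d' * b') - (gamma2 + v2 + mu) * (d - d')\<bar> \<le> 2*K2*n + \<bar>k\<bar> * (2*M*n) + \<bar>gamma2 + v2 + mu\<bar> * n"
        by (rule order_trans[OF triC]) (intro add_mono f2 p1(4,6))
    qed
    also have "\<dots> \<le> L * n" using n by (simp add: L_def algebra_simps)
    finally show ?thesis by (simp add: n_def)
  qed
  thus ?thesis using L by blast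
qed

lemma vd4:
  fixes x :: "real \<Rightarrow> state"
  assumes "(x has_vector_derivative v) (at t)"
  shows "((\<lambda>t. fst (x t)) has_real_derivative fst v) (at t)"
    "((\<lambda>t. fst (snd (x t))) has_real_derivative fst (snd v)) (at t)"
    "((\<lambda>t. fst (snd (snd (x t)))) has_real_derivative fst (snd (snd v))) (at t)"
    "((\<lambda>t. snd (snd (snd (x t)))) has_real_derivative snd (snd (snd v))) (at t)"
proof -
  have l1: "bounded_linear (\<lambda>p::state. fst p)" by (rule bounded_linear_fst)
  have l2: "bounded_linear (\<lambda>p::state. fst (snd p))" by (intro bounded_linear_compose[OF bounded_linear_fst bounded_linear_snd])
  have l3: "bounded_linear (\<lambda>p::state. fst (snd (snd p)))"
    by (intro bounded_linear_compose[OF bounded_linear_fst] bounded_linear_compose[OF bounded_linear_snd] bounded_linear_snd)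
  have l4: "bounded_linear (\<lambda>p::state. snd (snd (snd p)))"
    by (intro bounded_linear_compose[OF bounded_linear_snd] bounded_linear_compose[OF bounded_linear_snd] bounded_linear_snd)
  show "((\<lambda>t. fst (x t)) has_real_derivative fst v) (at t)"
    using bounded_linear.has_vector_derivative[OF l1 assms] by (simp add: has_real_derivative_iff_has_vector_derivative)
  show "((\<lambda>t. fst (snd (x t))) has_real_derivative fst (snd v)) (at t)"
    using bounded_linear.has_vector_derivative[OF l2 assms] by (simp add: has_real_derivative_iff_has_vector_derivative)
  show "((\<lambda>t. fst (snd (snd (x t)))) has_real_derivative fst (snd (snd v))) (at t)"
    using bounded_linear.has_vector_derivative[OF l3 assms] by (simp add: has_real_derivative_iff_has_vector_derivative)
  show "((\<lambda>t. snd (snd (snd (x t)))) has_real_derivative snd (snd (snd v))) (at t)"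
    using bounded_linear.has_vector_derivative[OF l4 assms] by (simp add: has_real_derivative_iff_has_vector_derivative)
qed

lemma within_to_at:
  assumes "(x has_vector_derivative v) (at t within {0..})" "t > 0"
  shows "(x has_vector_derivative v) (at t)"
proof -
  have "(x has_vector_derivative v) (at t within {0<..})"
    by (rule has_vector_derivative_within_subset[OF assms(1)]) auto
  thus ?thesis using has_vector_derivative_within_open[of t "{0<..}"] assms(2) by auto
qed

lemma inc_zero:
  assumes "incidence_hyp F f"
  shows "\<And>I. I \<ge> 0 \<Longrightarrow> F (0, I) = 0" "\<And>S. S \<ge> 0 \<Longrightarrow> F (S, 0) = 0"
  using assms unfolding incidence_hyp_def by auto

lemma sol_exists:
  assumes pos: "Lam > 0" "mu > 0" "r > 0" "k > 0" "gamma1 > 0" "gamma2 > 0"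
    and nonneg: "v1 \<ge> 0" "v2 \<ge> 0"
    and H1: "incidence_hyp F1 f1" and H2: "incidence_hyp F2 f2"
    and x0: "x0 \<in> orthant4"
  shows "\<exists>x. is_solution (field F1 F2 Lam mu r k gamma1 gamma2 v1 v2) orthant4 x \<and> x 0 = x0"
proof -
  let ?G = "field F1 F2 Lam mu r k gamma1 gamma2 v1 v2"
  obtain S0 V0 I0 J0 where x0e: "x0 = (S0, V0, I0, J0)" by (cases x0) auto
  have x0p: "S0 \<ge> 0" "V0 \<ge> 0" "I0 \<ge> 0" "J0 \<ge> 0" using x0 by (auto simp: x0e orthant4_def)
  define M' where "M' = max (S0 + V0 + I0 + J0) (Lam / mu)"
  define M where "M = M' + 1"
  have M'p: "M' \<ge> 0" "Lam \<le> mu * M'" "S0 + V0 + I0 + J0 \<le> M'"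
    using pos x0p by (auto simp: M'_def field_simps max_def)
  have M: "M \<ge> 0" "M > M'" using M'p by (auto simp: M_def)
  obtain L where L: "L > 0" "\<And>x y. norm (?G (Cl M x) - ?G (Cl M y)) \<le> L * norm (x - y)"
    using field_Cl_lip[OF H1 H2 M(1)] by blast
  define H where "H = (\<lambda>x. ?G (Cl M x))"
  have HCl: "H (Cl M x) = H x" for x
    by (cases x) (simp add: H_def Cl_def cl_props(6)[OF M(1)])
  have nCl: "norm (Cl M x) \<le> 4 * M" for x
  proof -
    obtain a b c d where x: "x = (a, b, c, d)" by (cases x) auto
    have "norm (Cl M x) \<le> \<bar>cl M a\<bar> + \<bar>cl M b\<bar> + \<bar>cl M c\<bar> + \<bar>cl M d\<bar>"
      unfolding x Cl_def by (simp only: case_prod_conv norm4_le)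
    also have "\<dots> \<le> M + M + M + M" using cl_props(1,2)[OF M(1)] by (intro add_mono) auto
    finally show ?thesis by simp
  qed
  have Hb: "norm (H x) \<le> norm (H 0) + L * (4 * M)" for x
  proof -
    have "norm (H (Cl M x)) \<le> norm (H 0) + norm (H (Cl M x) - H 0)" by (rule norm_triangle_sub)
    also have "norm (H (Cl M x) - H 0) \<le> L * norm (Cl M x - 0)" unfolding H_def by (rule L(2))
    also have "\<dots> \<le> L * (4 * M)" using nCl[of x] L(1) by (intro mult_left_mono) auto
    finally show ?thesis by (simp add: HCl)
  qed
  obtain x where xc: "continuous_on UNIV x" and x0x: "x 0 = x0"
    and xd: "\<And>t. t \<ge> 0 \<Longrightarrow> (x has_vector_derivative H (x t)) (at t within {0..})"
    using global_exist[of H L "norm (H 0) + L * (4 * M)" x0] L Hb unfolding H_def by blast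
  define S where "S = (\<lambda>t. fst (x t))"
  define V where "V = (\<lambda>t. fst (snd (x t)))"
  define I where "I = (\<lambda>t. fst (snd (snd (x t))))"
  define J where "J = (\<lambda>t. snd (snd (snd (x t))))"
  have xe: "x t = (S t, V t, I t, J t)" for t by (simp add: S_def V_def I_def J_def)
  have Hx: "H (x t) = (Lam - F1 (cl M (S t), cl M (I t)) - F2 (cl M (S t), cl M (J t)) - (r + mu) * cl M (S t),
   r * cl M (S t) - (mu + k * cl M (J t)) * cl M (V t),
   F1 (cl M (S t), cl M (I t)) - (gamma1 + v1 + mu) * cl M (I t),
   F2 (cl M (S t), cl M (J t)) + k * cl M (J t) * cl M (V t) - (gamma2 + v2 + mu) * cl M (J t))" for t
    unfolding H_def xe Cl_def by (simp add: field_eq)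
  have dS: "(S has_real_derivative (Lam - F1 (cl M (S t), cl M (I t)) - F2 (cl M (S t), cl M (J t)) - (r + mu) * cl M (S t))) (at t)"
    and dV: "(V has_real_derivative (r * cl M (S t) - (mu + k * cl M (J t)) * cl M (V t))) (at t)"
    and dI: "(I has_real_derivative (F1 (cl M (S t), cl M (I t)) - (gamma1 + v1 + mu) * cl M (I t))) (at t)"
    and dJ: "(J has_real_derivative (F2 (cl M (S t), cl M (J t)) + k * cl M (J t) * cl M (V t) - (gamma2 + v2 + mu) * cl M (J t))) (at t)"
    if t: "t > 0" for t
  proof -
    have "(x has_vector_derivative H (x t)) (at t)" using within_to_at[OF xd] t by auto
    note v = vd4[OF this]
    show "(S has_real_derivative (Lam - F1 (cl M (S t), cl M (I t)) - F2 (cl M (S t), cl M (J t)) - (r + mu) * cl M (S t))) (at t)"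
      using v(1) unfolding Hx by (simp add: S_def)
    show "(V has_real_derivative (r * cl M (S t) - (mu + k * cl M (J t)) * cl M (V t))) (at t)"
      using v(2) unfolding Hx by (simp add: V_def)
    show "(I has_real_derivative (F1 (cl M (S t), cl M (I t)) - (gamma1 + v1 + mu) * cl M (I t))) (at t)"
      using v(3) unfolding Hx by (simp add: I_def)
    show "(J has_real_derivative (F2 (cl M (S t), cl M (J t)) + k * cl M (J t) * cl M (V t) - (gamma2 + v2 + mu) * cl M (J t))) (at t)"
      using v(4) unfolding Hx by (simp add: J_def)
  qed
  have cS: "continuous_on {0..} S" and cV: "continuous_on {0..} V" and cI: "continuous_on {0..} I" and cJ: "continuous_on {0..} J"
    unfolding S_def V_def I_def J_def using continuous_on_subset[OF xc] by (auto intro!: continuous_intros)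
  have i0: "S 0 = S0" "V 0 = V0" "I 0 = I0" "J 0 = J0" using x0x x0e by (auto simp: S_def V_def I_def J_def)
  have clp: "0 \<le> cl M y" "cl M y \<le> M" for y using cl_props(1,2)[OF M(1)] by auto
  have Sp: "S t \<ge> 0" if "t \<ge> 0" for t
  proof (rule stay_nonneg[OF cS _ _ that])
    show "S 0 \<ge> 0" using i0 x0p by simp
    fix t :: real assume t: "t > 0" "S t < 0"
    have "cl M (S t) = 0" using t cl_props(4)[OF _ M(1)] by auto
    hence "Lam - F1 (cl M (S t), cl M (I t)) - F2 (cl M (S t), cl M (J t)) - (r + mu) * cl M (S t) = Lam"
      using inc_zero(1)[OF H1] inc_zero(1)[OF H2] clp by simp
    thus "\<exists>y. (S has_real_derivative y) (at t) \<and> y \<ge> 0" using dS[OF t(1)] pos by auto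
  qed
  have Vp: "V t \<ge> 0" if "t \<ge> 0" for t
  proof (rule stay_nonneg[OF cV _ _ that])
    show "V 0 \<ge> 0" using i0 x0p by simp
    fix t :: real assume t: "t > 0" "V t < 0"
    have "cl M (V t) = 0" using t cl_props(4)[OF _ M(1)] by auto
    hence "r * cl M (S t) - (mu + k * cl M (J t)) * cl M (V t) = r * cl M (S t)" by simp
    moreover have "r * cl M (S t) \<ge> 0" using pos clp by simp
    ultimately show "\<exists>y. (V has_real_derivative y) (at t) \<and> y \<ge> 0" using dV[OF t(1)] by auto
  qed
  have Ip: "I t \<ge> 0" if "t \<ge> 0" for t
  proof (rule stay_nonneg[OF cI _ _ that])
    show "I 0 \<ge> 0" using i0 x0p by simp
    fix t :: real assume t: "t > 0" "I t < 0"
    have "cl M (I t) = 0" using t cl_props(4)[OF _ M(1)] by auto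
    hence "F1 (cl M (S t), cl M (I t)) - (gamma1 + v1 + mu) * cl M (I t) = 0"
      using inc_zero(2)[OF H1] clp by simp
    thus "\<exists>y. (I has_real_derivative y) (at t) \<and> y \<ge> 0" using dI[OF t(1)] by auto
  qed
  have Jp: "J t \<ge> 0" if "t \<ge> 0" for t
  proof (rule stay_nonneg[OF cJ _ _ that])
    show "J 0 \<ge> 0" using i0 x0p by simp
    fix t :: real assume t: "t > 0" "J t < 0"
    have "cl M (J t) = 0" using t cl_props(4)[OF _ M(1)] by auto
    hence "F2 (cl M (S t), cl M (J t)) + k * cl M (J t) * cl M (V t) - (gamma2 + v2 + mu) * cl M (J t) = 0"
      using inc_zero(2)[OF H2] clp by simp
    thus "\<exists>y. (J has_real_derivative y) (at t) \<and> y \<ge> 0" using dJ[OF t(1)] by auto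
  qed
  define N where "N = (\<lambda>t. M' - (S t + V t + I t + J t))"
  have Np: "N t \<ge> 0" if "t \<ge> 0" for t
  proof (rule stay_nonneg[OF _ _ _ that])
    show "continuous_on {0..} N" unfolding N_def by (intro continuous_intros cS cV cI cJ)
    show "N 0 \<ge> 0" using i0 M'p by (simp add: N_def)
    fix t :: real assume t: "t > 0" "N t < 0"
    define a where "a = cl M (S t)" define b where "b = cl M (V t)"
    define c where "c = cl M (I t)" define d where "d = cl M (J t)"
    have der: "(N has_real_derivative -((Lam - F1 (a, c) - F2 (a, d) - (r + mu) * a) + (r * a - (mu + k * d) * b)
       + (F1 (a, c) - (gamma1 + v1 + mu) * c) + (F2 (a, d) + k * d * b - (gamma2 + v2 + mu) * d))) (at t)"
      unfolding N_def a_def b_def c_def d_def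
      using DERIV_diff[OF DERIV_const DERIV_add[OF DERIV_add[OF DERIV_add[OF dS[OF t(1)] dV[OF t(1)]] dI[OF t(1)]] dJ[OF t(1)]], of M']
      by simp
    have eq: "-((Lam - F1 (a, c) - F2 (a, d) - (r + mu) * a) + (r * a - (mu + k * d) * b)
       + (F1 (a, c) - (gamma1 + v1 + mu) * c) + (F2 (a, d) + k * d * b - (gamma2 + v2 + mu) * d))
       = mu * a + mu * b + (gamma1 + v1 + mu) * c + (gamma2 + v2 + mu) * d - Lam"
      by (simp add: algebra_simps)
    have nn: "S t \<ge> 0" "V t \<ge> 0" "I t \<ge> 0" "J t \<ge> 0" using Sp Vp Ip Jp t by auto
    have abcd: "a \<ge> 0" "b \<ge> 0" "c \<ge> 0" "d \<ge> 0" using clp by (auto simp: a_def b_def c_def d_def)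
    have sum: "a + b + c + d > M'"
    proof (cases "S t \<le> M \<and> V t \<le> M \<and> I t \<le> M \<and> J t \<le> M")
      case True
      hence "a = S t" "b = V t" "c = I t" "d = J t" using nn cl_props(5) by (auto simp: a_def b_def c_def d_def)
      thus ?thesis using t by (simp add: N_def)
    next
      case False
      hence "a = M \<or> b = M \<or> c = M \<or> d = M" using M by (auto simp: a_def b_def c_def d_def cl_def)
      thus ?thesis using abcd M by auto
    qed
    have "mu * (a + b + c + d) \<le> mu * a + mu * b + (gamma1 + v1 + mu) * c + (gamma2 + v2 + mu) * d"
      using abcd pos nonneg by (simp add: algebra_simps add_mono mult_right_mono)
    moreover have "mu * M' < mu * (a + b + c + d)" using sum pos by simp
    ultimately have "mu * a + mu * b + (gamma1 + v1 + mu) * c + (gamma2 + v2 + mu) * d - Lam \<ge> 0"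
      using M'p by linarith
    thus "\<exists>y. (N has_real_derivative y) (at t) \<and> y \<ge> 0" using der eq by auto
  qed
  have inbox: "x t \<in> orthant4 \<and> Cl M (x t) = x t" if "t \<ge> 0" for t
  proof -
    have nn: "S t \<ge> 0" "V t \<ge> 0" "I t \<ge> 0" "J t \<ge> 0" "S t + V t + I t + J t \<le> M'"
      using Sp Vp Ip Jp Np that by (auto simp: N_def)
    hence le: "S t \<le> M" "V t \<le> M" "I t \<le> M" "J t \<le> M" using M by linarith+
    show ?thesis unfolding xe using nn le cl_props(5) by (simp add: orthant4_def Cl_def)
  qed
  have "is_solution ?G orthant4 x" unfolding is_solution_def
  proof (intro allI impI conjI)
    fix t :: real assume t: "t \<ge> 0"
    show "x t \<in> orthant4" using inbox t by auto
    show "(x has_vector_derivative ?G (x t)) (at t within {0..})"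
      using xd[OF t] inbox[OF t] by (simp add: H_def)
  qed
  thus ?thesis using x0x by blast
qed

lemma partials:
  fixes F :: "real \<times> real \<Rightarrow> real"
  assumes d: "(F has_derivative Fp) (at (S0, I0))"
  shows "((\<lambda>s. F (s, I0)) has_real_derivative Fp (1, 0)) (at S0)"
    "((\<lambda>y. F (S0, y)) has_real_derivative Fp (0, 1)) (at I0)"
    "\<And>u w. Fp (u, w) = u * Fp (1, 0) + w * Fp (0, 1)"
proof -
  have bl: "bounded_linear Fp" using d by (rule has_derivative_bounded_linear)
  have lin: "Fp (u, w) = u * Fp (1, 0) + w * Fp (0, 1)" for u w
  proof -
    have "(u, w) = u *\<^sub>R (1, 0) + w *\<^sub>R (0, 1)" by simp
    hence "Fp (u, w) = Fp (u *\<^sub>R (1, 0)) + Fp (w *\<^sub>R (0, 1))"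
      by (metis bl linear_simps(1))
    moreover have "Fp (u *\<^sub>R (1, 0)) = u * Fp (1, 0)" "Fp (w *\<^sub>R (0, 1)) = w * Fp (0, 1)"
      using linear_simps(5)[OF bl, of u "(1::real, 0::real)"] linear_simps(5)[OF bl, of w "(0::real, 1::real)"] by simp_all
    ultimately show ?thesis by simp
  qed
  show "\<And>u w. Fp (u, w) = u * Fp (1, 0) + w * Fp (0, 1)" by (rule lin)
  have p1: "((\<lambda>s. (s, I0)) has_derivative (\<lambda>h. (h, 0))) (at S0)"
    by (auto intro!: derivative_eq_intros)
  have "((\<lambda>s. F (s, I0)) has_derivative (\<lambda>h. Fp (h, 0))) (at S0)"
    using diff_chain_at[OF p1, of F Fp] d by (simp add: o_def)
  moreover have "(\<lambda>h. Fp (h, 0)) = (*) (Fp (1, 0))"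
  proof
    fix h show "Fp (h, 0) = Fp (1, 0) * h" using lin[of h 0] by (simp add: mult.commute)
  qed
  ultimately show "((\<lambda>s. F (s, I0)) has_real_derivative Fp (1, 0)) (at S0)"
    by (simp add: has_field_derivative_def)
  have p2: "((\<lambda>y. (S0, y)) has_derivative (\<lambda>h. (0, h))) (at I0)"
    by (auto intro!: derivative_eq_intros)
  have "((\<lambda>y. F (S0, y)) has_derivative (\<lambda>h. Fp (0, h))) (at I0)"
    using diff_chain_at[OF p2, of F Fp] d by (simp add: o_def)
  moreover have "(\<lambda>h. Fp (0, h)) = (*) (Fp (0, 1))"
  proof
    fix h show "Fp (0, h) = Fp (0, 1) * h" using lin[of 0 h] by (simp add: mult.commute)
  qed
  ultimately show "((\<lambda>y. F (S0, y)) has_real_derivative Fp (0, 1)) (at I0)"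
    by (simp add: has_field_derivative_def)
qed

lemma inc_diff:
  assumes "incidence_hyp F f" "S \<ge> 0" "I \<ge> 0"
  shows "\<exists>Fp. (F has_derivative Fp) (at (S, I))" "\<exists>fp. (f has_derivative fp) (at (S, I))"
proof -
  obtain U F' where "quadrant \<subseteq> U" "\<forall>x\<in>U. (F has_derivative blinfun_apply (F' x)) (at x)"
    using C2_deriv[of F quadrant] assms(1) unfolding incidence_hyp_def by blast
  thus "\<exists>Fp. (F has_derivative Fp) (at (S, I))" using assms by (auto simp: quadrant_def)
  obtain U f' where "quadrant \<subseteq> U" "\<forall>x\<in>U. (f has_derivative blinfun_apply (f' x)) (at x)"
    using C2_deriv[of f quadrant] assms(1) unfolding incidence_hyp_def by blast
  thus "\<exists>fp. (f has_derivative fp) (at (S, I))" using assms by (auto simp: quadrant_def)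
qed

lemma inc_F1_lin:
  assumes H: "incidence_hyp F f" and S0: "S0 > 0" and I0: "I0 > 0" and a: "F (S0, I0) = a * I0"
  shows "\<exists>c b. c > 0 \<and> b \<le> a \<and> (\<forall>\<eta>>0. \<exists>\<rho>>0. \<forall>S I. norm ((S, I) - (S0, I0)) < \<rho> \<longrightarrow>
      \<bar>F (S, I) - F (S0, I0) - (c * (S - S0) + b * (I - I0))\<bar> \<le> \<eta> * norm ((S, I) - (S0, I0)))"
proof -
  obtain Fp where Fp: "(F has_derivative Fp) (at (S0, I0))" using inc_diff(1)[OF H] S0 I0 by fastforce
  obtain fp where fp: "(f has_derivative fp) (at (S0, I0))" using inc_diff(2)[OF H] S0 I0 by fastforce
  note P = partials[OF Fp] and Q = partials[OF fp]
  have Fe: "F (S, I) = I * f (S, I)" if "S \<ge> 0" "I \<ge> 0" for S I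
    using H that unfolding incidence_hyp_def quadrant_def by auto
  have pos: "pdS f S0 I0 > 0" "pdI f S0 I0 \<le> 0" using H S0 I0 unfolding incidence_hyp_def quadrant_def by auto
  have dS: "pdS f S0 I0 = fp (1, 0)" unfolding pdS_def using Q(1) by (rule DERIV_imp_deriv)
  have dI: "pdI f S0 I0 = fp (0, 1)" unfolding pdI_def using Q(2) by (rule DERIV_imp_deriv)
  have c: "Fp (1, 0) = I0 * fp (1, 0)"
  proof -
    have "((\<lambda>s. I0 * f (s, I0)) has_real_derivative I0 * fp (1, 0)) (at S0)"
      using DERIV_cmult[OF Q(1), of I0] by simp
    hence "((\<lambda>s. F (s, I0)) has_real_derivative I0 * fp (1, 0)) (at S0)"
    proof (rule has_field_derivative_transform_within_open[of _ _ _ "{0<..}"])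
      fix x :: real assume "x \<in> {0<..}"
      thus "I0 * f (x, I0) = F (x, I0)" using Fe[of x I0] I0 by simp
    qed (use S0 in simp_all)
    thus ?thesis using P(1) DERIV_unique by blast
  qed
  have fa: "f (S0, I0) = a" using Fe[of S0 I0] a S0 I0 by simp
  have b: "Fp (0, 1) = f (S0, I0) + I0 * fp (0, 1)"
  proof -
    have "((\<lambda>y. y * f (S0, y)) has_real_derivative 1 * f (S0, I0) + fp (0, 1) * I0) (at I0)"
      by (rule DERIV_mult[OF DERIV_ident Q(2)])
    hence "((\<lambda>y. F (S0, y)) has_real_derivative 1 * f (S0, I0) + fp (0, 1) * I0) (at I0)"
    proof (rule has_field_derivative_transform_within_open[of _ _ _ "{0<..}"])
      fix x :: real assume "x \<in> {0<..}"
      thus "x * f (S0, x) = F (S0, x)" using Fe[of S0 x] S0 by simp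
    qed (use I0 in simp_all)
    thus ?thesis using P(2) DERIV_unique by (simp add: mult.commute)
  qed
  have cpos: "Fp (1, 0) > 0" using c pos dS I0 by simp
  have ble: "Fp (0, 1) \<le> a" using b fa pos dI I0 by (simp add: mult_nonneg_nonpos)
  have "\<forall>\<eta>>0. \<exists>\<rho>>0. \<forall>S I. norm ((S, I) - (S0, I0)) < \<rho> \<longrightarrow>
      \<bar>F (S, I) - F (S0, I0) - (Fp (1, 0) * (S - S0) + Fp (0, 1) * (I - I0))\<bar> \<le> \<eta> * norm ((S, I) - (S0, I0))"
  proof (intro allI impI)
    fix \<eta> :: real assume "\<eta> > 0"
    then obtain \<rho> where \<rho>: "\<rho> > 0" "\<forall>y. norm (y - (S0, I0)) < \<rho> \<longrightarrow> norm (F y - F (S0, I0) - Fp (y - (S0, I0))) \<le> \<eta> * norm (y - (S0, I0))"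
      using Fp unfolding has_derivative_at_alt by blast
    show "\<exists>\<rho>>0. \<forall>S I. norm ((S, I) - (S0, I0)) < \<rho> \<longrightarrow>
      \<bar>F (S, I) - F (S0, I0) - (Fp (1, 0) * (S - S0) + Fp (0, 1) * (I - I0))\<bar> \<le> \<eta> * norm ((S, I) - (S0, I0))"
    proof (intro exI[of _ \<rho>] conjI allI impI)
      fix S I assume "norm ((S, I) - (S0, I0)) < \<rho>"
      hence "norm (F (S, I) - F (S0, I0) - Fp ((S, I) - (S0, I0))) \<le> \<eta> * norm ((S, I) - (S0, I0))" using \<rho> by blast
      moreover have "Fp ((S, I) - (S0, I0)) = Fp (1, 0) * (S - S0) + Fp (0, 1) * (I - I0)"
        using P(3)[of "S - S0" "I - I0"] by (simp add: mult.commute)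
      ultimately show "\<bar>F (S, I) - F (S0, I0) - (Fp (1, 0) * (S - S0) + Fp (0, 1) * (I - I0))\<bar> \<le> \<eta> * norm ((S, I) - (S0, I0))"
        by simp
    qed (use \<rho> in auto)
  qed
  thus ?thesis
    by (intro exI[of _ "Fp (1, 0)"] exI[of _ "Fp (0, 1)"] conjI cpos ble)
qed

lemma inc_F2_zero:
  assumes H: "incidence_hyp F f" and S0: "S0 > 0"
  shows "pdI F S0 0 = f (S0, 0)" "isCont f (S0, 0)" "f (S0, 0) \<ge> 0"
    "\<And>S I. S \<ge> 0 \<Longrightarrow> I \<ge> 0 \<Longrightarrow> F (S, I) = I * f (S, I) \<and> f (S, I) \<ge> 0"
proof -
  show Fe: "\<And>S I. S \<ge> 0 \<Longrightarrow> I \<ge> 0 \<Longrightarrow> F (S, I) = I * f (S, I) \<and> f (S, I) \<ge> 0"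
    using H unfolding incidence_hyp_def quadrant_def by auto
  thus "f (S0, 0) \<ge> 0" using S0 by simp
  obtain fp where fp: "(f has_derivative fp) (at (S0, 0))" using inc_diff(2)[OF H] S0 by fastforce
  show fc: "isCont f (S0, 0)" using fp by (rule has_derivative_continuous)
  obtain Fp where Fp: "(F has_derivative Fp) (at (S0, 0))" using inc_diff(1)[OF H] S0 by fastforce
  note P = partials[OF Fp]
  have pd: "pdI F S0 0 = Fp (0, 1)" unfolding pdI_def using P(2) by (rule DERIV_imp_deriv)
  have F0: "F (S0, 0) = 0" using H S0 unfolding incidence_hyp_def by auto
  have l1: "((\<lambda>h. (F (S0, 0 + h) - F (S0, 0)) / h) \<longlongrightarrow> Fp (0, 1)) (at_right 0)"
    using P(2) unfolding DERIV_def by (rule filterlim_mono) (simp_all add: at_le)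
  have l2: "((\<lambda>h. f (S0, h)) \<longlongrightarrow> f (S0, 0)) (at_right 0)"
  proof -
    have "((\<lambda>h. (S0, h)) \<longlongrightarrow> (S0, 0)) (at_right (0::real))"
      by (intro tendsto_intros tendsto_ident_at)
    from isCont_tendsto_compose[OF fc this] show ?thesis .
  qed
  have "eventually (\<lambda>h. f (S0, h) = (F (S0, 0 + h) - F (S0, 0)) / h) (at_right (0::real))"
  proof (rule eventually_at_rightI[of 0 1])
    fix h :: real assume "h \<in> {0<..<1}"
    thus "f (S0, h) = (F (S0, 0 + h) - F (S0, 0)) / h" using Fe[of S0 h] S0 F0 by simp
  qed simp
  hence l3: "((\<lambda>h. (F (S0, 0 + h) - F (S0, 0)) / h) \<longlongrightarrow> f (S0, 0)) (at_right 0)"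
    by (rule tendsto_cong[THEN iffD1, OF _ l2])
  have "Fp (0, 1) = f (S0, 0)" by (rule tendsto_unique[OF trivial_limit_at_right_real l1 l3])
  thus "pdI F S0 0 = f (S0, 0)" using pd by simp
qed

lemma sol_basic:
  assumes "is_solution G D x"
  shows "continuous_on {0..} x" "\<And>t. t > 0 \<Longrightarrow> (x has_vector_derivative G (x t)) (at t)"
    "\<And>t. t \<ge> 0 \<Longrightarrow> x t \<in> D"
proof -
  show "continuous_on {0..} x"
    unfolding continuous_on_eq_continuous_within
    using assms unfolding is_solution_def by (auto intro: has_vector_derivative_continuous)
  show "\<And>t. t > 0 \<Longrightarrow> (x has_vector_derivative G (x t)) (at t)"
    using assms unfolding is_solution_def by (auto intro: within_to_at)
  show "\<And>t. t \<ge> 0 \<Longrightarrow> x t \<in> D" using assms unfolding is_solution_def by auto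
qed

lemma norm4_sq: "(norm ((a, b, c, d) :: state))\<^sup>2 = a\<^sup>2 + b\<^sup>2 + c\<^sup>2 + d\<^sup>2"
  by (simp add: norm_Pair add.assoc)

lemma norm_sub14: "norm ((a, d) :: real \<times> real) \<le> norm ((a, b, c, d) :: state)"
proof -
  have "(norm (a, d))\<^sup>2 \<le> (norm ((a, b, c, d) :: state))\<^sup>2"
    unfolding norm4_sq by (simp add: norm_Pair)
  thus ?thesis by (rule power2_le_imp_le) simp
qed

lemma unstable_part:
  fixes F1 f1 F2 f2 :: "real \<times> real \<Rightarrow> real"
    and Lam mu r k gamma1 gamma2 v1 v2 Sb Vb Ib :: real
  assumes pos: "Lam > 0" "mu > 0" "r > 0" "k > 0" "gamma1 > 0" "gamma2 > 0"
    and nonneg: "v1 \<ge> 0" "v2 \<ge> 0"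
    and H1: "incidence_hyp F1 f1" and H2: "incidence_hyp F2 f2"
    and Epos: "Sb > 0" "Vb > 0" "Ib > 0"
    and R: "pdI F2 Sb 0 + k * Vb > gamma2 + v2 + mu"
  shows "unstable (field F1 F2 Lam mu r k gamma1 gamma2 v1 v2) orthant4 (Sb, Vb, Ib, 0)"
proof -
  let ?G = "field F1 F2 Lam mu r k gamma1 gamma2 v1 v2"
  define a2 where "a2 = gamma2 + v2 + mu"
  note F2z = inc_F2_zero[OF H2 Epos(1)]
  define p where "p = f2 (Sb, 0)"
  define m where "m = (p + k * Vb - a2) / 2"
  have m: "m > 0" using R F2z(1) by (simp add: m_def p_def a2_def)
  obtain \<rho>1 where \<rho>1: "\<rho>1 > 0" "\<And>q. dist q (Sb, 0) < \<rho>1 \<Longrightarrow> dist (f2 q) p < m/2"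
    using F2z(2) m unfolding continuous_at_eps_delta p_def by (metis half_gt_zero)
  define \<epsilon> where "\<epsilon> = min \<rho>1 (m / (2*k))"
  have \<epsilon>: "\<epsilon> > 0" using \<rho>1 m pos by (simp add: \<epsilon>_def)
  have near: "f2 (S, J) + k * V - a2 \<ge> m"
    if "dist ((S, V, I, J) :: state) (Sb, Vb, Ib, 0) < \<epsilon>" for S V I J
  proof -
    have "dist (S, J) (Sb, 0) \<le> dist ((S, V, I, J) :: state) (Sb, Vb, Ib, 0)"
      unfolding dist_norm using norm_sub14[of "S - Sb" "J" "V - Vb" "I - Ib"] by simp
    hence "dist (f2 (S, J)) p < m/2" using that \<rho>1 by (simp add: \<epsilon>_def)
    hence f: "f2 (S, J) > p - m/2" unfolding dist_real_def by linarith
    have "\<bar>V - Vb\<bar> \<le> dist ((S, V, I, J) :: state) (Sb, Vb, Ib, 0)"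
      using comp_le(2)[of "(S, V, I, J) - (Sb, Vb, Ib, 0)"] by (simp add: dist_norm)
    hence "\<bar>V - Vb\<bar> < m / (2*k)" using that by (simp add: \<epsilon>_def)
    hence "k * \<bar>V - Vb\<bar> < m / 2" using pos by (simp add: field_simps)
    moreover have "k * (Vb - V) \<le> k * \<bar>V - Vb\<bar>" using pos by (intro mult_left_mono) auto
    ultimately have "k * V > k * Vb - m/2" by (simp add: algebra_simps)
    moreover have "2 * m = p + k * Vb - a2" by (simp add: m_def)
    ultimately show ?thesis using f by linarith
  qed
  show ?thesis unfolding unstable_def lyap_stable_def
  proof
    assume "\<forall>\<epsilon>>0. \<exists>\<delta>>0. \<forall>x. is_solution ?G orthant4 x \<and> dist (x 0) (Sb, Vb, Ib, 0) < \<delta> \<longrightarrow>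
        (\<forall>t\<ge>0. dist (x t) (Sb, Vb, Ib, 0) < \<epsilon>)"
    then obtain \<delta> where \<delta>: "\<delta> > 0" "\<And>x. is_solution ?G orthant4 x \<Longrightarrow> dist (x 0) (Sb, Vb, Ib, 0) < \<delta> \<Longrightarrow>
        (\<forall>t\<ge>0. dist (x t) (Sb, Vb, Ib, 0) < \<epsilon>)" using \<epsilon> by blast
    define x0 where "x0 = ((Sb, Vb, Ib, \<delta>/2) :: state)"
    have x0o: "x0 \<in> orthant4" using Epos \<delta> by (simp add: x0_def orthant4_def)
    obtain x where x: "is_solution ?G orthant4 x" "x 0 = x0"
      using sol_exists[OF pos nonneg H1 H2 x0o] by blast
    have "dist x0 (Sb, Vb, Ib, 0) = \<delta>/2"
      using norm4_sq[of 0 0 0 "\<delta>/2"] \<delta> by (simp add: x0_def dist_norm)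
    hence stay: "\<And>t. t \<ge> 0 \<Longrightarrow> dist (x t) (Sb, Vb, Ib, 0) < \<epsilon>" using \<delta> x by auto
    note sb = sol_basic[OF x(1)]
    define J where "J = (\<lambda>t. snd (snd (snd (x t))))"
    have Jc: "continuous_on {0..} (\<lambda>t. - J t)"
      unfolding J_def by (intro continuous_intros sb(1))
    have J0: "J 0 = \<delta>/2" using x(2) by (simp add: J_def x0_def)
    have "- J t \<le> - J 0 * exp (- (- m) * t) \<and> True" if t: "t \<ge> 0" for t
    proof (rule trap[OF Jc, where \<omega> = 1])
      fix t :: real assume t: "t > 0"
      obtain S V I JJ where xt: "x t = (S, V, I, JJ)" by (cases "x t") auto
      have "x t \<in> orthant4" using sb(3) t by simp
      hence nn: "S \<ge> 0" "JJ \<ge> 0" by (auto simp: xt orthant4_def)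
      have "((\<lambda>t. snd (snd (snd (x t)))) has_real_derivative snd (snd (snd (?G (x t))))) (at t)"
        by (rule vd4(4)[OF sb(2)[OF t]])
      moreover have "snd (snd (snd (?G (x t)))) = JJ * (f2 (S, JJ) + k * V - a2)"
        using F2z(4)[OF nn] by (simp add: xt field_eq a2_def algebra_simps)
      moreover have "f2 (S, JJ) + k * V - a2 \<ge> m" using near[of S V I JJ] stay[of t] t xt by simp
      hence "JJ * (f2 (S, JJ) + k * V - a2) \<ge> JJ * m" using nn by (simp add: mult_left_mono)
      ultimately show "\<exists>y. ((\<lambda>t. - J t) has_real_derivative y) (at t) \<and> y \<le> - (- m) * (- J t)"
        unfolding J_def using xt by (intro exI[of _ "- (JJ * (f2 (S, JJ) + k * V - a2))"]) (auto intro!: derivative_eq_intros simp: algebra_simps)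
    next
      fix t :: real assume "t \<ge> 0"
      have "0 < J 0 * exp (- (- m) * t)" using J0 \<delta> by simp
      thus "- J 0 * exp (- (- m) * t) < 1" by linarith
    qed (use t in auto)
    hence grow: "J t \<ge> \<delta>/2 * exp (m * t)" if "t \<ge> 0" for t using that J0 by fastforce
    define T where "T = 2 * \<epsilon> / (\<delta> * m)"
    have T: "T \<ge> 0" using \<epsilon> \<delta> m by (simp add: T_def)
    have "exp (m * T) \<ge> 1 + m * T" by (rule exp_ge_add_one_self)
    hence "\<delta>/2 * exp (m * T) \<ge> \<delta>/2 * (1 + m * T)" using \<delta> by simp
    moreover have "\<delta>/2 * (1 + m * T) = \<delta>/2 + \<epsilon>" using \<delta> m by (simp add: T_def field_simps)
    ultimately have big: "J T \<ge> \<delta>/2 + \<epsilon>" using grow[OF T] by linarith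
    have "\<bar>J T\<bar> \<le> dist (x T) (Sb, Vb, Ib, 0)"
      using comp_le(4)[of "x T - (Sb, Vb, Ib, 0)"] by (simp add: J_def dist_norm)
    thus False using stay[OF T] big \<delta> by linarith
  qed
qed

lemma tri3p: "\<bar>(a::real) + b + c\<bar> \<le> \<bar>a\<bar> + \<bar>b\<bar> + \<bar>c\<bar>" by linarith
lemma tri3m: "\<bar>(a::real) - b + c\<bar> \<le> \<bar>a\<bar> + \<bar>b\<bar> + \<bar>c\<bar>" by linarith

lemma lyap_ineq:
  fixes lam c h e D A0 C1 Fr \<gamma> \<eta> \<beta> mu r k m \<rho> p' Vb s w v z P R V G4 :: real
  assumes lam: "lam > 0" and c: "c > 0" and h: "h \<ge> 0" and D: "D = lam * h - e * c" "D > 0"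
    and A0: "A0 = lam + \<bar>e\<bar> + c + h" and C1: "C1 = 2 * A0\<^sup>2 + 2 * D"
    and Fr: "Fr = h\<^sup>2 + e\<^sup>2 + c\<^sup>2 + lam\<^sup>2" and \<gamma>: "\<gamma> = (lam + h) * D\<^sup>2 / Fr"
    and \<eta>: "\<eta> \<ge> 0" "4 * C1 * \<eta> \<le> \<gamma> / 2"
    and \<beta>: "\<beta> > 0" "2 * \<beta> * r\<^sup>2 / mu \<le> \<gamma> / 2"
    and mu: "mu > 0" and r: "r > 0" and k: "k > 0"
    and R: "\<bar>R\<bar> \<le> \<eta> * (\<bar>s - w\<bar> + \<bar>w\<bar>)"
    and P: "0 \<le> P" "P \<le> p' * z" and z: "z \<ge> 0" and p': "p' \<ge> 0"
    and \<rho>1: "C1 * (3 * \<rho>) * p' \<le> m / 8" and \<rho>2: "2 * \<beta> * k * \<rho> * (Vb + \<rho>) \<le> m / 8"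
    and near: "\<bar>s - w\<bar> < \<rho>" "\<bar>w\<bar> < \<rho>" "\<bar>v\<bar> < \<rho>"
    and V: "V = Vb + v" "V \<ge> 0"
    and G4: "G4 \<le> - (m / 2) * z"
  shows "(2 * (-lam * s + e * w) * (-lam) + 2 * (c * s - h * w) * c + 2 * D * s) * ((-lam * s + e * w) - P)
       + (2 * (-lam * s + e * w) * e - 2 * (c * s - h * w) * h + 2 * D * w) * ((c * s - h * w) + R)
       + 2 * \<beta> * v * (r * (s - w) - mu * v - k * z * V) + G4
       \<le> - \<gamma> * (s\<^sup>2 + w\<^sup>2) - \<beta> * mu * v\<^sup>2 - (m / 4) * z"
proof -
  define y1 where "y1 = -lam * s + e * w"
  define y2 where "y2 = c * s - h * w"
  define Qs where "Qs = 2 * y1 * (-lam) + 2 * y2 * c + 2 * D * s"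
  define Qw where "Qw = 2 * y1 * e - 2 * y2 * h + 2 * D * w"
  define X where "X = s\<^sup>2 + w\<^sup>2"
  define Y where "Y = y1\<^sup>2 + y2\<^sup>2"
  define \<sigma> where "\<sigma> = \<bar>s\<bar> + \<bar>w\<bar>"
  define u where "u = s - w"
  have \<sigma>0: "\<sigma> \<ge> 0" by (simp add: \<sigma>_def)
  have Fr0: "Fr > 0"
  proof -
    have "0 < lam\<^sup>2" using lam by simp
    moreover have "0 \<le> h\<^sup>2 + e\<^sup>2 + c\<^sup>2" by simp
    ultimately show ?thesis unfolding Fr by linarith
  qed
  have ident: "Qs * y1 + Qw * y2 = - 2 * (lam + h) * Y"
    unfolding Qs_def Qw_def Y_def y1_def y2_def D(1) by (simp add: algebra_simps power2_eq_square)
  have Ds: "D * s = - h * y1 - e * y2" unfolding y1_def y2_def D(1) by (simp add: algebra_simps)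
  have Dw: "D * w = - c * y1 - lam * y2" unfolding y1_def y2_def D(1) by (simp add: algebra_simps)
  have cs1: "(- h * y1 - e * y2)\<^sup>2 \<le> (h\<^sup>2 + e\<^sup>2) * Y"
  proof -
    have "(h\<^sup>2 + e\<^sup>2) * Y - (- h * y1 - e * y2)\<^sup>2 = (h * y2 - e * y1)\<^sup>2"
      unfolding Y_def by (simp add: algebra_simps power2_eq_square)
    thus ?thesis by (metis diff_ge_0_iff_ge zero_le_power2)
  qed
  have cs2: "(- c * y1 - lam * y2)\<^sup>2 \<le> (c\<^sup>2 + lam\<^sup>2) * Y"
  proof -
    have "(c\<^sup>2 + lam\<^sup>2) * Y - (- c * y1 - lam * y2)\<^sup>2 = (c * y2 - lam * y1)\<^sup>2"
      unfolding Y_def by (simp add: algebra_simps power2_eq_square)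
    thus ?thesis by (metis diff_ge_0_iff_ge zero_le_power2)
  qed
  have DX: "D\<^sup>2 * X \<le> Fr * Y"
  proof -
    have "D\<^sup>2 * X = (D * s)\<^sup>2 + (D * w)\<^sup>2" by (simp add: X_def power_mult_distrib algebra_simps)
    also have "\<dots> \<le> (h\<^sup>2 + e\<^sup>2) * Y + (c\<^sup>2 + lam\<^sup>2) * Y" unfolding Ds Dw by (rule add_mono[OF cs1 cs2])
    also have "\<dots> = Fr * Y" by (simp add: Fr algebra_simps)
    finally show ?thesis .
  qed
  have gX: "\<gamma> * X \<le> (lam + h) * Y"
  proof -
    have "\<gamma> * X = (lam + h) * (D\<^sup>2 * X) / Fr" by (simp add: \<gamma>)
    also have "\<dots> \<le> (lam + h) * (Fr * Y) / Fr"
      using DX lam h Fr0 by (intro divide_right_mono mult_left_mono) auto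
    also have "\<dots> = (lam + h) * Y" using Fr0 by simp
    finally show ?thesis .
  qed
  have y1b: "\<bar>y1\<bar> \<le> A0 * \<sigma>"
  proof -
    have "\<bar>y1\<bar> \<le> \<bar>-lam * s\<bar> + \<bar>e * w\<bar>" unfolding y1_def by (rule abs_triangle_ineq)
    also have "\<dots> = lam * \<bar>s\<bar> + \<bar>e\<bar> * \<bar>w\<bar>" using lam by (simp add: abs_mult)
    finally have "\<bar>y1\<bar> \<le> lam * \<bar>s\<bar> + \<bar>e\<bar> * \<bar>w\<bar>" .
    also have "\<dots> \<le> A0 * \<bar>s\<bar> + A0 * \<bar>w\<bar>" using A0 c h lam by (intro add_mono mult_right_mono) auto
    finally show ?thesis by (simp add: \<sigma>_def algebra_simps)
  qed
  have y2b: "\<bar>y2\<bar> \<le> A0 * \<sigma>"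
  proof -
    have "\<bar>y2\<bar> \<le> \<bar>c * s\<bar> + \<bar>h * w\<bar>" unfolding y2_def by (rule abs_triangle_ineq4)
    also have "\<dots> = c * \<bar>s\<bar> + h * \<bar>w\<bar>" using c h by (simp add: abs_mult)
    finally have "\<bar>y2\<bar> \<le> c * \<bar>s\<bar> + h * \<bar>w\<bar>" .
    also have "\<dots> \<le> A0 * \<bar>s\<bar> + A0 * \<bar>w\<bar>" using A0 c h lam by (intro add_mono mult_right_mono) auto
    finally show ?thesis by (simp add: \<sigma>_def algebra_simps)
  qed
  have A0p: "A0 \<ge> 0" using A0 lam c h by simp
  have Qsb: "\<bar>Qs\<bar> \<le> C1 * \<sigma>"
  proof -
    have "\<bar>Qs\<bar> \<le> \<bar>2 * y1 * (-lam)\<bar> + \<bar>2 * y2 * c\<bar> + \<bar>2 * D * s\<bar>"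
      unfolding Qs_def by (rule tri3p)
    also have "\<dots> = 2 * lam * \<bar>y1\<bar> + 2 * c * \<bar>y2\<bar> + 2 * D * \<bar>s\<bar>"
      using lam c D(2) by (simp add: abs_mult)
    finally have "\<bar>Qs\<bar> \<le> 2 * lam * \<bar>y1\<bar> + 2 * c * \<bar>y2\<bar> + 2 * D * \<bar>s\<bar>" .
    also have "\<dots> \<le> 2 * lam * (A0 * \<sigma>) + 2 * c * (A0 * \<sigma>) + 2 * D * \<sigma>"
    proof -
      have "\<bar>s\<bar> \<le> \<sigma>" by (simp add: \<sigma>_def)
      hence "2 * D * \<bar>s\<bar> \<le> 2 * D * \<sigma>" using D(2) by (intro mult_left_mono) auto
      moreover have "2 * lam * \<bar>y1\<bar> \<le> 2 * lam * (A0 * \<sigma>)" using y1b lam by (intro mult_left_mono) auto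
      moreover have "2 * c * \<bar>y2\<bar> \<le> 2 * c * (A0 * \<sigma>)" using y2b c by (intro mult_left_mono) auto
      ultimately show ?thesis by linarith
    qed
    also have "\<dots> \<le> 2 * A0 * (A0 * \<sigma>) + 2 * D * \<sigma>"
    proof -
      have "2 * lam * (A0 * \<sigma>) + 2 * c * (A0 * \<sigma>) = 2 * (lam + c) * (A0 * \<sigma>)" by (simp add: algebra_simps)
      also have "\<dots> \<le> 2 * A0 * (A0 * \<sigma>)" using A0 h A0p \<sigma>0 by (intro mult_right_mono) auto
      finally show ?thesis by simp
    qed
    also have "\<dots> = C1 * \<sigma>" by (simp add: C1 power2_eq_square algebra_simps)
    finally show ?thesis .
  qed
  have Qwb: "\<bar>Qw\<bar> \<le> C1 * \<sigma>"
  proof -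
    have "\<bar>Qw\<bar> \<le> \<bar>2 * y1 * e\<bar> + \<bar>2 * y2 * h\<bar> + \<bar>2 * D * w\<bar>"
      unfolding Qw_def by (rule tri3m)
    also have "\<dots> = 2 * \<bar>e\<bar> * \<bar>y1\<bar> + 2 * h * \<bar>y2\<bar> + 2 * D * \<bar>w\<bar>"
      using h D(2) by (simp add: abs_mult)
    finally have "\<bar>Qw\<bar> \<le> 2 * \<bar>e\<bar> * \<bar>y1\<bar> + 2 * h * \<bar>y2\<bar> + 2 * D * \<bar>w\<bar>" .
    also have "\<dots> \<le> 2 * \<bar>e\<bar> * (A0 * \<sigma>) + 2 * h * (A0 * \<sigma>) + 2 * D * \<sigma>"
    proof -
      have "\<bar>w\<bar> \<le> \<sigma>" by (simp add: \<sigma>_def)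
      hence "2 * D * \<bar>w\<bar> \<le> 2 * D * \<sigma>" using D(2) by (intro mult_left_mono) auto
      moreover have "2 * \<bar>e\<bar> * \<bar>y1\<bar> \<le> 2 * \<bar>e\<bar> * (A0 * \<sigma>)" using y1b by (intro mult_left_mono) auto
      moreover have "2 * h * \<bar>y2\<bar> \<le> 2 * h * (A0 * \<sigma>)" using y2b h by (intro mult_left_mono) auto
      ultimately show ?thesis by linarith
    qed
    also have "\<dots> \<le> 2 * A0 * (A0 * \<sigma>) + 2 * D * \<sigma>"
    proof -
      have "2 * \<bar>e\<bar> * (A0 * \<sigma>) + 2 * h * (A0 * \<sigma>) = 2 * (\<bar>e\<bar> + h) * (A0 * \<sigma>)" by (simp add: algebra_simps)
      also have "\<dots> \<le> 2 * A0 * (A0 * \<sigma>)" using A0 lam c A0p \<sigma>0 by (intro mult_right_mono) auto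
      finally show ?thesis by simp
    qed
    also have "\<dots> = C1 * \<sigma>" by (simp add: C1 power2_eq_square algebra_simps)
    finally show ?thesis .
  qed
  have C1p: "C1 \<ge> 0" using C1 D(2) by simp
  have \<sigma>X: "\<sigma>\<^sup>2 \<le> 2 * X"
  proof -
    have "2 * X - \<sigma>\<^sup>2 = (\<bar>s\<bar> - \<bar>w\<bar>)\<^sup>2" by (simp add: X_def \<sigma>_def power2_eq_square algebra_simps)
    thus ?thesis by (metis diff_ge_0_iff_ge zero_le_power2)
  qed
  have uX: "u\<^sup>2 \<le> 2 * X"
  proof -
    have "2 * X - u\<^sup>2 = (s + w)\<^sup>2" by (simp add: X_def u_def power2_eq_square algebra_simps)
    thus ?thesis by (metis diff_ge_0_iff_ge zero_le_power2)
  qed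
  have \<sigma>\<rho>: "\<sigma> \<le> 3 * \<rho>"
  proof -
    have "\<bar>s\<bar> \<le> \<bar>s - w\<bar> + \<bar>w\<bar>" by linarith
    thus ?thesis using near by (simp add: \<sigma>_def)
  qed
  have b1: "- Qs * P \<le> (m / 8) * z"
  proof -
    have "- Qs * P \<le> \<bar>Qs\<bar> * P" using P(1) by (intro mult_right_mono) auto
    also have "\<dots> \<le> (C1 * \<sigma>) * (p' * z)" using Qsb P C1p \<sigma>0 by (intro mult_mono) auto
    also have "\<dots> \<le> (C1 * (3 * \<rho>)) * p' * z"
    proof -
      have "\<sigma> * (p' * z) \<le> (3 * \<rho>) * (p' * z)" using \<sigma>\<rho> p' z by (intro mult_right_mono) auto
      hence "C1 * (\<sigma> * (p' * z)) \<le> C1 * ((3 * \<rho>) * (p' * z))" using C1p by (rule mult_left_mono)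
      thus ?thesis by (simp add: mult.assoc)
    qed
    also have "\<dots> \<le> (m / 8) * z" using \<rho>1 z by (intro mult_right_mono) auto
    finally show ?thesis .
  qed
  have b2: "Qw * R \<le> 4 * C1 * \<eta> * X"
  proof -
    have q1: "Qw * R \<le> \<bar>Qw\<bar> * \<bar>R\<bar>" by (metis abs_ge_self abs_mult)
    have q2: "\<bar>s - w\<bar> + \<bar>w\<bar> \<le> 2 * \<sigma>"
      unfolding \<sigma>_def using abs_triangle_ineq4[of s w] abs_ge_zero[of s] by simp
    have "\<eta> * (\<bar>s - w\<bar> + \<bar>w\<bar>) \<le> \<eta> * (2 * \<sigma>)" using q2 \<eta> by (intro mult_left_mono) auto
    hence q3: "\<bar>R\<bar> \<le> \<eta> * (2 * \<sigma>)" using R by linarith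
    have q4: "\<bar>Qw\<bar> * \<bar>R\<bar> \<le> (C1 * \<sigma>) * (\<eta> * (2 * \<sigma>))" using Qwb q3 by (intro mult_mono) auto
    have q5: "(C1 * \<sigma>) * (\<eta> * (2 * \<sigma>)) = 2 * C1 * \<eta> * \<sigma>\<^sup>2" by (simp add: power2_eq_square algebra_simps)
    have q6: "2 * C1 * \<eta> * \<sigma>\<^sup>2 \<le> 2 * C1 * \<eta> * (2 * X)" using \<sigma>X C1p \<eta> by (intro mult_left_mono) auto
    show ?thesis using q1 q4 q5 q6 by linarith
  qed
  have b3: "2 * \<beta> * v * (r * u) \<le> \<beta> * mu * v\<^sup>2 + (2 * \<beta> * r\<^sup>2 / mu) * X"
  proof -
    have "2 * v * (r * u) \<le> mu * v\<^sup>2 + r\<^sup>2 * u\<^sup>2 / mu"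
    proof -
      have "mu * (mu * v\<^sup>2 + r\<^sup>2 * u\<^sup>2 / mu - 2 * v * (r * u)) = (mu * v - r * u)\<^sup>2"
        using mu by (simp add: power2_eq_square algebra_simps)
      hence "mu * (mu * v\<^sup>2 + r\<^sup>2 * u\<^sup>2 / mu - 2 * v * (r * u)) \<ge> 0" by simp
      thus ?thesis using mu by (simp add: zero_le_mult_iff)
    qed
    hence "\<beta> * (2 * v * (r * u)) \<le> \<beta> * (mu * v\<^sup>2 + r\<^sup>2 * u\<^sup>2 / mu)" using \<beta> by (intro mult_left_mono) auto
    also have "r\<^sup>2 * u\<^sup>2 / mu \<le> r\<^sup>2 * (2 * X) / mu" using uX mu by (intro divide_right_mono mult_left_mono) auto
    hence "\<beta> * (mu * v\<^sup>2 + r\<^sup>2 * u\<^sup>2 / mu) \<le> \<beta> * (mu * v\<^sup>2 + r\<^sup>2 * (2 * X) / mu)" using \<beta> by (intro mult_left_mono) auto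
    finally show ?thesis by (simp add: algebra_simps)
  qed
  have b4: "- 2 * \<beta> * v * (k * z * V) \<le> (m / 8) * z"
  proof -
    have "- 2 * \<beta> * v * (k * z * V) = (2 * \<beta> * k * V * z) * (- v)" by (simp add: algebra_simps)
    also have "\<dots> \<le> (2 * \<beta> * k * V * z) * \<bar>v\<bar>" using \<beta> k z V by (intro mult_left_mono) auto
    also have "\<dots> = 2 * \<beta> * k * \<bar>v\<bar> * V * z" by (simp add: algebra_simps)
    finally have "- 2 * \<beta> * v * (k * z * V) \<le> 2 * \<beta> * k * \<bar>v\<bar> * V * z" .
    also have "\<dots> \<le> 2 * \<beta> * k * \<rho> * (Vb + \<rho>) * z"
    proof -
      have "V \<le> Vb + \<rho>" using V near by linarith
      hence "\<bar>v\<bar> * V \<le> \<rho> * (Vb + \<rho>)" using near V by (intro mult_mono) auto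
      hence "(\<bar>v\<bar> * V) * z \<le> (\<rho> * (Vb + \<rho>)) * z" using z by (rule mult_right_mono)
      hence "(2 * \<beta> * k) * ((\<bar>v\<bar> * V) * z) \<le> (2 * \<beta> * k) * ((\<rho> * (Vb + \<rho>)) * z)"
        using \<beta> k by (intro mult_left_mono) auto
      thus ?thesis by (simp add: mult.assoc)
    qed
    also have "\<dots> \<le> (m / 8) * z" using \<rho>2 z by (intro mult_right_mono) auto
    finally show ?thesis .
  qed
  have "(2 * (-lam * s + e * w) * (-lam) + 2 * (c * s - h * w) * c + 2 * D * s) * ((-lam * s + e * w) - P)
       + (2 * (-lam * s + e * w) * e - 2 * (c * s - h * w) * h + 2 * D * w) * ((c * s - h * w) + R)
       + 2 * \<beta> * v * (r * (s - w) - mu * v - k * z * V) + G4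
     = (Qs * y1 + Qw * y2) - Qs * P + Qw * R + 2 * \<beta> * v * (r * u) - 2 * \<beta> * mu * v\<^sup>2 - 2 * \<beta> * v * (k * z * V) + G4"
    unfolding Qs_def Qw_def y1_def y2_def u_def by (simp add: algebra_simps power2_eq_square)
  also have "\<dots> \<le> - 2 * (lam + h) * Y + (m / 8) * z + 4 * C1 * \<eta> * X + (\<beta> * mu * v\<^sup>2 + (2 * \<beta> * r\<^sup>2 / mu) * X)
       - 2 * \<beta> * mu * v\<^sup>2 + (m / 8) * z - (m / 2) * z"
    using ident b1 b2 b3 b4 G4 by linarith
  also have "\<dots> \<le> - \<gamma> * (s\<^sup>2 + w\<^sup>2) - \<beta> * mu * v\<^sup>2 - (m / 4) * z"
  proof -
    have "4 * C1 * \<eta> * X \<le> \<gamma> / 2 * X" using \<eta> by (intro mult_right_mono) (auto simp: X_def)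
    moreover have "(2 * \<beta> * r\<^sup>2 / mu) * X \<le> \<gamma> / 2 * X" using \<beta> by (intro mult_right_mono) (auto simp: X_def)
    moreover have "- 2 * (lam + h) * Y \<le> - 2 * (\<gamma> * X)" using gX by linarith
    ultimately show ?thesis by (simp add: X_def algebra_simps)
  qed
  finally show ?thesis .
qed

lemma sq_deriv:
  assumes "(f has_real_derivative D) (at t)"
  shows "((\<lambda>t. (f t)\<^sup>2) has_real_derivative 2 * f t * D) (at t)"
proof -
  have "((\<lambda>t. f t * f t) has_real_derivative D * f t + D * f t) (at t)"
    using DERIV_mult[OF assms assms] by (simp add: mult.commute)
  thus ?thesis by (simp add: power2_eq_square algebra_simps)
qed

lemma Qderiv:
  fixes s w v z :: "real \<Rightarrow> real"
  assumes ds: "(s has_real_derivative s') (at t)" and dw: "(w has_real_derivative w') (at t)"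
    and dv: "(v has_real_derivative v') (at t)" and dz: "(z has_real_derivative z') (at t)"
  shows "((\<lambda>t. (-lam * s t + e * w t)\<^sup>2 + (c * s t - h * w t)\<^sup>2 + D * ((s t)\<^sup>2 + (w t)\<^sup>2) + \<beta> * (v t)\<^sup>2 + z t)
    has_real_derivative ((2 * (-lam * s t + e * w t) * (-lam) + 2 * (c * s t - h * w t) * c + 2 * D * s t) * s'
      + (2 * (-lam * s t + e * w t) * e - 2 * (c * s t - h * w t) * h + 2 * D * w t) * w' + 2 * \<beta> * v t * v' + z')) (at t)"
proof -
  have d1: "((\<lambda>t. -lam * s t + e * w t) has_real_derivative (-lam * s' + e * w')) (at t)"
    by (rule DERIV_add[OF DERIV_cmult[OF ds] DERIV_cmult[OF dw]])
  have d2: "((\<lambda>t. c * s t - h * w t) has_real_derivative (c * s' - h * w')) (at t)"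
    by (rule DERIV_diff[OF DERIV_cmult[OF ds] DERIV_cmult[OF dw]])
  have d3: "((\<lambda>t. D * ((s t)\<^sup>2 + (w t)\<^sup>2)) has_real_derivative D * (2 * s t * s' + 2 * w t * w')) (at t)"
    by (rule DERIV_cmult[OF DERIV_add[OF sq_deriv[OF ds] sq_deriv[OF dw]]])
  have d4: "((\<lambda>t. \<beta> * (v t)\<^sup>2) has_real_derivative \<beta> * (2 * v t * v')) (at t)"
    by (rule DERIV_cmult[OF sq_deriv[OF dv]])
  have "((\<lambda>t. (-lam * s t + e * w t)\<^sup>2 + (c * s t - h * w t)\<^sup>2 + D * ((s t)\<^sup>2 + (w t)\<^sup>2) + \<beta> * (v t)\<^sup>2 + z t)
    has_real_derivative (2 * (-lam * s t + e * w t) * (-lam * s' + e * w') + 2 * (c * s t - h * w t) * (c * s' - h * w')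
      + D * (2 * s t * s' + 2 * w t * w') + \<beta> * (2 * v t * v') + z')) (at t)"
    by (rule DERIV_add[OF DERIV_add[OF DERIV_add[OF DERIV_add[OF sq_deriv[OF d1] sq_deriv[OF d2]] d3] d4] dz])
  moreover have "2 * (-lam * s t + e * w t) * (-lam * s' + e * w') + 2 * (c * s t - h * w t) * (c * s' - h * w')
      + D * (2 * s t * s' + 2 * w t * w') + \<beta> * (2 * v t * v') + z'
    = (2 * (-lam * s t + e * w t) * (-lam) + 2 * (c * s t - h * w t) * c + 2 * D * s t) * s'
      + (2 * (-lam * s t + e * w t) * e - 2 * (c * s t - h * w t) * h + 2 * D * w t) * w' + 2 * \<beta> * v t * v' + z'"
    by (simp add: algebra_simps)
  ultimately show ?thesis by (rule DERIV_cong)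
qed

lemma Ybound:
  fixes lam e c h A0 s w :: real
  assumes "lam \<ge> 0" "c \<ge> 0" "h \<ge> 0" "A0 = lam + \<bar>e\<bar> + c + h"
  shows "(-lam * s + e * w)\<^sup>2 + (c * s - h * w)\<^sup>2 \<le> 4 * A0\<^sup>2 * (s\<^sup>2 + w\<^sup>2)"
proof -
  have sq: "(a + b)\<^sup>2 \<le> 2 * a\<^sup>2 + 2 * b\<^sup>2" for a b :: real
  proof -
    have "2 * a\<^sup>2 + 2 * b\<^sup>2 - (a + b)\<^sup>2 = (a - b)\<^sup>2" by (simp add: power2_eq_square algebra_simps)
    thus ?thesis by (metis diff_ge_0_iff_ge zero_le_power2)
  qed
  have le: "x\<^sup>2 \<le> A0\<^sup>2" if "\<bar>x\<bar> \<le> A0" for x :: real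
  proof -
    have "\<bar>x\<bar>\<^sup>2 \<le> A0\<^sup>2" by (rule power_mono[OF that abs_ge_zero])
    thus ?thesis by simp
  qed
  have l1: "lam\<^sup>2 \<le> A0\<^sup>2" "e\<^sup>2 \<le> A0\<^sup>2" "c\<^sup>2 \<le> A0\<^sup>2" "h\<^sup>2 \<le> A0\<^sup>2"
    by (rule le, use assms in simp)+
  have m: "a * x \<le> b * x" if "a \<le> b" "0 \<le> x" for a b x :: real using that by (rule mult_right_mono)
  have "(-lam * s + e * w)\<^sup>2 \<le> 2 * (lam\<^sup>2 * s\<^sup>2) + 2 * (e\<^sup>2 * w\<^sup>2)"
    using sq[of "-lam * s" "e * w"] by (simp add: power_mult_distrib)
  moreover have "lam\<^sup>2 * s\<^sup>2 \<le> A0\<^sup>2 * s\<^sup>2" "e\<^sup>2 * w\<^sup>2 \<le> A0\<^sup>2 * w\<^sup>2" using m l1 by simp_all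
  ultimately have 1: "(-lam * s + e * w)\<^sup>2 \<le> 2 * (A0\<^sup>2 * s\<^sup>2) + 2 * (A0\<^sup>2 * w\<^sup>2)" by linarith
  have "(c * s - h * w)\<^sup>2 \<le> 2 * (c\<^sup>2 * s\<^sup>2) + 2 * (h\<^sup>2 * w\<^sup>2)"
    using sq[of "c * s" "- h * w"] by (simp add: power_mult_distrib)
  moreover have "c\<^sup>2 * s\<^sup>2 \<le> A0\<^sup>2 * s\<^sup>2" "h\<^sup>2 * w\<^sup>2 \<le> A0\<^sup>2 * w\<^sup>2" using m l1 by simp_all
  ultimately have 2: "(c * s - h * w)\<^sup>2 \<le> 2 * (A0\<^sup>2 * s\<^sup>2) + 2 * (A0\<^sup>2 * w\<^sup>2)" by linarith
  have "4 * A0\<^sup>2 * (s\<^sup>2 + w\<^sup>2) = 2 * (A0\<^sup>2 * s\<^sup>2) + 2 * (A0\<^sup>2 * w\<^sup>2) + (2 * (A0\<^sup>2 * s\<^sup>2) + 2 * (A0\<^sup>2 * w\<^sup>2))"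
    by (simp add: algebra_simps)
  thus ?thesis using 1 2 by linarith
qed

lemma sqlt: "(a::real)\<^sup>2 < b\<^sup>2 \<Longrightarrow> 0 \<le> b \<Longrightarrow> \<bar>a\<bar> < b"
  using power2_less_imp_less[of "\<bar>a\<bar>" b] by simp

lemma stable_part:
  fixes F1 f1 F2 f2 :: "real \<times> real \<Rightarrow> real"
    and Lam mu r k gamma1 gamma2 v1 v2 Sb Vb Ib :: real
  assumes pos: "Lam > 0" "mu > 0" "r > 0" "k > 0" "gamma1 > 0" "gamma2 > 0"
    and nonneg: "v1 \<ge> 0" "v2 \<ge> 0"
    and H1: "incidence_hyp F1 f1" and H2: "incidence_hyp F2 f2"
    and Epos: "Sb > 0" "Vb > 0" "Ib > 0"
    and Eeq: "field F1 F2 Lam mu r k gamma1 gamma2 v1 v2 (Sb, Vb, Ib, 0) = (0, 0, 0, 0)"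
    and Rl: "pdI F2 Sb 0 + k * Vb < gamma2 + v2 + mu"
  shows "loc_asym_stable (field F1 F2 Lam mu r k gamma1 gamma2 v1 v2) orthant4 (Sb, Vb, Ib, 0)"
proof -
  let ?G = "field F1 F2 Lam mu r k gamma1 gamma2 v1 v2"
  let ?e = "(Sb, Vb, Ib, 0) :: state"
  define lam where "lam = r + mu"
  define a1 where "a1 = gamma1 + v1 + mu"
  define a2 where "a2 = gamma2 + v2 + mu"
  have lam: "lam > 0" and a1: "a1 > 0" and a2: "a2 > 0"
    using pos nonneg by (simp_all add: lam_def a1_def a2_def)
  have F20: "F2 (Sb, 0) = 0" using inc_zero(2)[OF H2] Epos by simp
  have ee: "Lam - F1 (Sb, Ib) - F2 (Sb, 0) - (r + mu) * Sb = 0" "r * Sb - mu * Vb = 0"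
    "F1 (Sb, Ib) - (gamma1 + v1 + mu) * Ib = 0"
    using Eeq by (simp_all add: field_eq)
  have eqs: "Lam = lam * Sb + a1 * Ib" "r * Sb = mu * Vb" "F1 (Sb, Ib) = a1 * Ib"
    using ee F20 by (simp_all add: lam_def a1_def)
  obtain c b where cb: "c > 0" "b \<le> a1" and rem: "\<forall>\<eta>>0. \<exists>\<rho>>0. \<forall>S I. norm ((S, I) - (Sb, Ib)) < \<rho> \<longrightarrow>
      \<bar>F1 (S, I) - F1 (Sb, Ib) - (c * (S - Sb) + b * (I - Ib))\<bar> \<le> \<eta> * norm ((S, I) - (Sb, Ib))"
    using inc_F1_lin[OF H1 Epos(1) Epos(3) eqs(3)] by blast
  define d where "d = a1 - b"
  define h where "h = c + d"
  define e where "e = lam - a1"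
  define D where "D = lam * h - e * c"
  define A0 where "A0 = lam + \<bar>e\<bar> + c + h"
  define C1 where "C1 = 2 * A0\<^sup>2 + 2 * D"
  define Fr where "Fr = h\<^sup>2 + e\<^sup>2 + c\<^sup>2 + lam\<^sup>2"
  define \<gamma> where "\<gamma> = (lam + h) * D\<^sup>2 / Fr"
  define \<eta> where "\<eta> = \<gamma> / (8 * C1)"
  define \<beta> where "\<beta> = \<gamma> * mu / (4 * r\<^sup>2)"
  have d: "d \<ge> 0" using cb by (simp add: d_def)
  have h: "h \<ge> 0" using d cb by (simp add: h_def)
  have "D = lam * d + a1 * c" by (simp add: D_def h_def e_def algebra_simps)
  hence Dp: "D > 0" using lam d a1 cb by (simp add: add_nonneg_pos)
  have Frp: "Fr > 0"
  proof -
    have "0 < lam\<^sup>2" using lam by simp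
    moreover have "0 \<le> h\<^sup>2 + e\<^sup>2 + c\<^sup>2" by simp
    ultimately show ?thesis unfolding Fr_def by linarith
  qed
  have \<gamma>p: "\<gamma> > 0" using lam h Dp Frp by (simp add: \<gamma>_def)
  have A0p: "A0 \<ge> 0" using lam cb h by (simp add: A0_def)
  have C1p: "C1 > 0" using Dp by (simp add: C1_def add_nonneg_pos)
  have \<eta>p: "\<eta> > 0" using \<gamma>p C1p by (simp add: \<eta>_def)
  have \<eta>b: "4 * C1 * \<eta> \<le> \<gamma> / 2" using C1p by (simp add: \<eta>_def)
  have \<beta>p: "\<beta> > 0" using \<gamma>p pos by (simp add: \<beta>_def)
  have \<beta>b: "2 * \<beta> * r\<^sup>2 / mu \<le> \<gamma> / 2" using pos by (simp add: \<beta>_def power2_eq_square)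
  note F2z = inc_F2_zero[OF H2 Epos(1)]
  define p where "p = f2 (Sb, 0)"
  have p: "p \<ge> 0" using F2z(3) by (simp add: p_def)
  define m where "m = a2 - p - k * Vb"
  have m: "m > 0" using Rl F2z(1) by (simp add: m_def p_def a2_def)
  define p' where "p' = p + m / 4"
  have p': "p' > 0" using p m by (simp add: p'_def)
  obtain \<rho>f where \<rho>f: "\<rho>f > 0" "\<And>q. dist q (Sb, 0) < \<rho>f \<Longrightarrow> dist (f2 q) p < m / 4"
    using F2z(2) m unfolding continuous_at_eps_delta p_def by (metis zero_less_divide_iff zero_less_numeral)
  obtain \<rho>F where \<rho>F: "\<rho>F > 0" "\<And>S I. norm ((S, I) - (Sb, Ib)) < \<rho>F \<Longrightarrow>
      \<bar>F1 (S, I) - F1 (Sb, Ib) - (c * (S - Sb) + b * (I - Ib))\<bar> \<le> \<eta> * norm ((S, I) - (Sb, Ib))"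
    using rem \<eta>p by blast
  define \<rho> where "\<rho> = min (min (min (\<rho>F / 2) (\<rho>f / 2)) (min (m / (4 * k)) 1))
     (min (m / (24 * C1 * p')) (m / (16 * \<beta> * k * (Vb + 1))))"
  have \<rho>p: "\<rho> > 0" using \<rho>F \<rho>f m pos C1p p' \<beta>p Epos by (simp add: \<rho>_def)
  have \<rho>le: "\<rho> \<le> \<rho>F / 2" "\<rho> \<le> \<rho>f / 2" "\<rho> \<le> m / (4 * k)" "\<rho> \<le> 1"
     "\<rho> \<le> m / (24 * C1 * p')" "\<rho> \<le> m / (16 * \<beta> * k * (Vb + 1))"
    by (simp_all add: \<rho>_def)
  have k\<rho>: "k * \<rho> \<le> m / 4" using \<rho>le(3) pos by (simp add: field_simps)
  have \<rho>1: "C1 * (3 * \<rho>) * p' \<le> m / 8"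
  proof -
    have "\<rho> * (24 * C1 * p') \<le> m" using \<rho>le(5) C1p p' by (simp add: field_simps)
    thus ?thesis by (simp add: algebra_simps)
  qed
  have \<rho>2: "2 * \<beta> * k * \<rho> * (Vb + \<rho>) \<le> m / 8"
  proof -
    have Q: "16 * \<beta> * k * (Vb + 1) > 0" using \<beta>p pos Epos by simp
    have "\<rho> * (16 * \<beta> * k * (Vb + 1)) \<le> m" using \<rho>le(6) Q by (simp add: pos_le_divide_eq)
    moreover have "2 * \<beta> * k * \<rho> * (Vb + \<rho>) \<le> 2 * \<beta> * k * \<rho> * (Vb + 1)"
      using \<rho>le(4) \<beta>p pos \<rho>p by (intro mult_left_mono) auto
    ultimately show ?thesis by (simp add: algebra_simps)
  qed
  define Nb where "Nb = (\<lambda>\<rho>' (q::state). q \<in> orthant4 \<and> \<bar>fst q - Sb\<bar> < \<rho>' \<and> \<bar>fst (snd q) - Vb\<bar> < \<rho>'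
     \<and> \<bar>fst (snd (snd q)) - Ib\<bar> < \<rho>' \<and> snd (snd (snd q)) < \<rho>')"
  define sS where "sS = (\<lambda>q::state. fst q - Sb + (fst (snd (snd q)) - Ib))"
  define wS where "wS = (\<lambda>q::state. fst (snd (snd q)) - Ib)"
  define vS where "vS = (\<lambda>q::state. fst (snd q) - Vb)"
  define zS where "zS = (\<lambda>q::state. snd (snd (snd q)))"
  define Wf where "Wf = (\<lambda>q. (-lam * sS q + e * wS q)\<^sup>2 + (c * sS q - h * wS q)\<^sup>2 + D * ((sS q)\<^sup>2 + (wS q)\<^sup>2)
     + \<beta> * (vS q)\<^sup>2 + zS q)"
  define \<kappa> where "\<kappa> = min (min (\<gamma> / (4 * A0\<^sup>2 + D)) mu) (m / 4)"
  have \<kappa>p: "\<kappa> > 0" using \<gamma>p Dp pos m by (simp add: \<kappa>_def add_nonneg_pos)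
  have Wc: "continuous_on UNIV Wf"
    unfolding Wf_def sS_def wS_def vS_def zS_def by (intro continuous_intros)
  have We: "Wf ?e = 0" by (simp add: Wf_def sS_def wS_def vS_def zS_def)
  have Wlow: "Wf q \<ge> D * ((sS q)\<^sup>2 + (wS q)\<^sup>2) + \<beta> * (vS q)\<^sup>2 + zS q" for q
    unfolding Wf_def by simp
  have Wnn: "Wf q \<ge> 0" if "q \<in> orthant4" for q
  proof -
    have "zS q \<ge> 0" using that by (cases q) (auto simp: zS_def orthant4_def)
    moreover have "D * ((sS q)\<^sup>2 + (wS q)\<^sup>2) \<ge> 0" "\<beta> * (vS q)\<^sup>2 \<ge> 0" using Dp \<beta>p by simp_all
    ultimately show ?thesis using Wlow[of q] by linarith
  qed
  define om where "om = (\<lambda>\<rho>'. min (min (D * (\<rho>'\<^sup>2 / 4)) (\<beta> * (\<rho>'\<^sup>2 / 2))) (\<rho>' / 2))"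
  have omp: "om \<rho>' > 0" if "\<rho>' > 0" for \<rho>' using that Dp \<beta>p by (simp add: om_def)
  have SL: "Nb \<rho>' q \<and> dist q ?e < 4 * \<rho>'" if q: "q \<in> orthant4" and \<rho>': "\<rho>' > 0" and W: "Wf q \<le> om \<rho>'" for \<rho>' q
  proof -
    obtain S V I J where qe: "q = (S, V, I, J)" by (cases q) auto
    have J: "J \<ge> 0" using q by (simp add: qe orthant4_def)
    have t1: "D * ((sS q)\<^sup>2 + (wS q)\<^sup>2) \<le> D * (\<rho>'\<^sup>2 / 4)" and t2: "\<beta> * (vS q)\<^sup>2 \<le> \<beta> * (\<rho>'\<^sup>2 / 2)"
      and t3: "zS q \<le> \<rho>' / 2"
    proof -
      have a: "D * ((sS q)\<^sup>2 + (wS q)\<^sup>2) \<ge> 0" "\<beta> * (vS q)\<^sup>2 \<ge> 0" "zS q \<ge> 0"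
        using Dp \<beta>p J by (simp_all add: zS_def qe)
      have "Wf q \<le> D * (\<rho>'\<^sup>2 / 4)" "Wf q \<le> \<beta> * (\<rho>'\<^sup>2 / 2)" "Wf q \<le> \<rho>' / 2" using W by (simp_all add: om_def)
      thus "D * ((sS q)\<^sup>2 + (wS q)\<^sup>2) \<le> D * (\<rho>'\<^sup>2 / 4)" "\<beta> * (vS q)\<^sup>2 \<le> \<beta> * (\<rho>'\<^sup>2 / 2)" "zS q \<le> \<rho>' / 2"
        using Wlow[of q] a by linarith+
    qed
    from t1 have X: "(sS q)\<^sup>2 + (wS q)\<^sup>2 \<le> \<rho>'\<^sup>2 / 4" using Dp by (rule mult_left_le_imp_le)
    from t2 have v2: "(vS q)\<^sup>2 \<le> \<rho>'\<^sup>2 / 2" using \<beta>p by (rule mult_left_le_imp_le)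
    have r2: "\<rho>'\<^sup>2 > 0" using \<rho>' by simp
    have w: "\<bar>I - Ib\<bar> < \<rho>'"
    proof (rule sqlt)
      have "(wS q)\<^sup>2 \<le> \<rho>'\<^sup>2 / 4" using X zero_le_power2[of "sS q"] by linarith
      hence "(I - Ib)\<^sup>2 \<le> \<rho>'\<^sup>2 / 4" by (simp add: wS_def qe)
      thus "(I - Ib)\<^sup>2 < \<rho>'\<^sup>2" using r2 by linarith
    qed (use \<rho>' in simp)
    have u: "\<bar>S - Sb\<bar> < \<rho>'"
    proof (rule sqlt)
      have "(sS q - wS q)\<^sup>2 \<le> 2 * ((sS q)\<^sup>2 + (wS q)\<^sup>2)"
      proof -
        have "2 * ((sS q)\<^sup>2 + (wS q)\<^sup>2) - (sS q - wS q)\<^sup>2 = (sS q + wS q)\<^sup>2" by (simp add: power2_eq_square algebra_simps)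
        thus ?thesis by (metis diff_ge_0_iff_ge zero_le_power2)
      qed
      moreover have "sS q - wS q = S - Sb" by (simp add: sS_def wS_def qe)
      ultimately have "(S - Sb)\<^sup>2 \<le> 2 * (\<rho>'\<^sup>2 / 4)" using X by simp
      thus "(S - Sb)\<^sup>2 < \<rho>'\<^sup>2" using r2 by linarith
    qed (use \<rho>' in simp)
    have v: "\<bar>V - Vb\<bar> < \<rho>'"
    proof (rule sqlt)
      have "(V - Vb)\<^sup>2 \<le> \<rho>'\<^sup>2 / 2" using v2 by (simp add: vS_def qe)
      thus "(V - Vb)\<^sup>2 < \<rho>'\<^sup>2" using r2 by linarith
    qed (use \<rho>' in simp)
    have z: "J < \<rho>'" using t3 \<rho>' by (simp add: zS_def qe)
    have "Nb \<rho>' q" using q u v w z by (simp add: Nb_def qe)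
    moreover have "dist q ?e < 4 * \<rho>'"
    proof -
      have "dist q ?e \<le> \<bar>S - Sb\<bar> + \<bar>V - Vb\<bar> + \<bar>I - Ib\<bar> + \<bar>J - 0\<bar>"
        unfolding dist_norm qe using norm4_le[of "S - Sb" "V - Vb" "I - Ib" "J - 0"] by simp
      thus ?thesis using u v w z J by simp
    qed
    ultimately show ?thesis by blast
  qed
  have DER: "\<exists>y. ((\<lambda>t. Wf (x t)) has_real_derivative y) (at t) \<and> y \<le> - \<kappa> * Wf (x t)"
    if x: "is_solution ?G orthant4 x" and t: "t > 0" and N: "Nb \<rho> (x t)" for x t
  proof -
    note sb = sol_basic[OF x]
    obtain S V I J where xt: "x t = (S, V, I, J)" by (cases "x t") auto
    have o: "S \<ge> 0" "V \<ge> 0" "I \<ge> 0" "J \<ge> 0" "\<bar>S - Sb\<bar> < \<rho>" "\<bar>V - Vb\<bar> < \<rho>" "\<bar>I - Ib\<bar> < \<rho>" "J < \<rho>"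
      using N by (simp_all add: Nb_def xt orthant4_def)
    define G1 where "G1 = Lam - F1 (S, I) - F2 (S, J) - (r + mu) * S"
    define G2 where "G2 = r * S - (mu + k * J) * V"
    define G3 where "G3 = F1 (S, I) - (gamma1 + v1 + mu) * I"
    define G4 where "G4 = F2 (S, J) + k * J * V - (gamma2 + v2 + mu) * J"
    have Gx: "?G (x t) = (G1, G2, G3, G4)" by (simp add: xt field_eq G1_def G2_def G3_def G4_def)
    note v4 = vd4[OF sb(2)[OF t], unfolded Gx, simplified]
    have ds: "((\<lambda>t. sS (x t)) has_real_derivative G1 + G3) (at t)"
      unfolding sS_def using DERIV_add[OF DERIV_diff[OF v4(1) DERIV_const] DERIV_diff[OF v4(3) DERIV_const]] by simp
    have dw: "((\<lambda>t. wS (x t)) has_real_derivative G3) (at t)"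
      unfolding wS_def using DERIV_diff[OF v4(3) DERIV_const] by simp
    have dv: "((\<lambda>t. vS (x t)) has_real_derivative G2) (at t)"
      unfolding vS_def using DERIV_diff[OF v4(2) DERIV_const] by simp
    have dz: "((\<lambda>t. zS (x t)) has_real_derivative G4) (at t)"
      unfolding zS_def using v4(4) by simp
    define s0 where "s0 = sS (x t)" define w0 where "w0 = wS (x t)"
    define v0 where "v0 = vS (x t)" define z0 where "z0 = zS (x t)"
    have vals: "s0 = (S - Sb) + (I - Ib)" "w0 = I - Ib" "v0 = V - Vb" "z0 = J"
      by (simp_all add: s0_def w0_def v0_def z0_def sS_def wS_def vS_def zS_def xt)
    define y where "y = (2 * (-lam * s0 + e * w0) * (-lam) + 2 * (c * s0 - h * w0) * c + 2 * D * s0) * (G1 + G3)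
      + (2 * (-lam * s0 + e * w0) * e - 2 * (c * s0 - h * w0) * h + 2 * D * w0) * G3 + 2 * \<beta> * v0 * G2 + G4"
    have dW: "((\<lambda>t. Wf (x t)) has_real_derivative y) (at t)"
      unfolding Wf_def y_def s0_def w0_def v0_def z0_def by (rule Qderiv[OF ds dw dv dz])
    define P where "P = F2 (S, J)"
    define R where "R = F1 (S, I) - F1 (Sb, Ib) - (c * (S - Sb) + b * (I - Ib))"
    have F2e: "F2 (S, J) = J * f2 (S, J)" "f2 (S, J) \<ge> 0" using F2z(4)[OF o(1) o(4)] by auto
    have e13: "G1 + G3 = (-lam * s0 + e * w0) - P"
      unfolding G1_def G3_def P_def vals e_def using eqs(1) by (simp add: lam_def a1_def algebra_simps)
    have e3: "G3 = (c * s0 - h * w0) + R"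
      unfolding G3_def R_def vals h_def d_def using eqs(3) by (simp add: a1_def algebra_simps)
    have e2: "G2 = r * (s0 - w0) - mu * v0 - k * z0 * V"
      unfolding G2_def vals using eqs(2) by (simp add: algebra_simps)
    have e4: "G4 = z0 * (f2 (S, J) + k * V - a2)"
      unfolding G4_def vals using F2e(1) by (simp add: a2_def algebra_simps)
    have nF: "norm ((S, I) - (Sb, Ib)) \<le> \<bar>S - Sb\<bar> + \<bar>I - Ib\<bar>" using norm2_le[of "S - Sb" "I - Ib"] by simp
    have Rb: "\<bar>R\<bar> \<le> \<eta> * (\<bar>s0 - w0\<bar> + \<bar>w0\<bar>)"
    proof -
      have "norm ((S, I) - (Sb, Ib)) < \<rho>F" using nF o \<rho>le(1) by linarith
      hence "\<bar>R\<bar> \<le> \<eta> * norm ((S, I) - (Sb, Ib))" unfolding R_def by (rule \<rho>F(2))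
      also have "\<dots> \<le> \<eta> * (\<bar>S - Sb\<bar> + \<bar>I - Ib\<bar>)" using nF \<eta>p by (intro mult_left_mono) auto
      finally show ?thesis by (simp add: vals)
    qed
    have f2b: "f2 (S, J) < p'"
    proof -
      have "dist (S, J) (Sb, 0) \<le> \<bar>S - Sb\<bar> + \<bar>J\<bar>" unfolding dist_norm using norm2_le[of "S - Sb" "J"] by simp
      hence "dist (S, J) (Sb, 0) < \<rho>f" using o \<rho>le(2) by linarith
      hence "dist (f2 (S, J)) p < m / 4" by (rule \<rho>f(2))
      thus ?thesis unfolding dist_real_def p'_def by linarith
    qed
    have Pb: "0 \<le> P" "P \<le> p' * z0"
    proof -
      show "0 \<le> P" using F2e o by (simp add: P_def)
      have "J * f2 (S, J) \<le> J * p'" using f2b o by (intro mult_left_mono) auto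
      thus "P \<le> p' * z0" using F2e by (simp add: P_def vals mult.commute)
    qed
    have G4b: "G4 \<le> - (m / 2) * z0"
    proof -
      have "k * V \<le> k * Vb + k * \<rho>"
      proof -
        have "V \<le> Vb + \<rho>" using o by linarith
        hence "k * V \<le> k * (Vb + \<rho>)" using pos by (intro mult_left_mono) auto
        thus ?thesis by (simp add: algebra_simps)
      qed
      moreover have "p' = p + m / 4" "m = a2 - p - k * Vb" by (simp_all add: p'_def m_def)
      ultimately have "f2 (S, J) + k * V - a2 \<le> - (m / 2)" using f2b k\<rho> by linarith
      hence "z0 * (f2 (S, J) + k * V - a2) \<le> z0 * (- (m / 2))" using o vals by (intro mult_left_mono) auto
      thus ?thesis using e4 by (simp add: mult.commute)
    qed
    have LI: "(2 * (-lam * s0 + e * w0) * (-lam) + 2 * (c * s0 - h * w0) * c + 2 * D * s0) * ((-lam * s0 + e * w0) - P)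
       + (2 * (-lam * s0 + e * w0) * e - 2 * (c * s0 - h * w0) * h + 2 * D * w0) * ((c * s0 - h * w0) + R)
       + 2 * \<beta> * v0 * (r * (s0 - w0) - mu * v0 - k * z0 * V) + G4
       \<le> - \<gamma> * (s0\<^sup>2 + w0\<^sup>2) - \<beta> * mu * v0\<^sup>2 - (m / 4) * z0"
    proof (rule lyap_ineq[OF lam cb(1) h D_def Dp A0_def C1_def Fr_def \<gamma>_def _ \<eta>b \<beta>p \<beta>b pos(2) pos(3) pos(4) Rb Pb _ _ \<rho>1 \<rho>2 _ _ _ _ _ G4b])
      show "\<eta> \<ge> 0" using \<eta>p by simp
      show "z0 \<ge> 0" "p' \<ge> 0" using o p' vals by simp_all
      show "\<bar>s0 - w0\<bar> < \<rho>" "\<bar>w0\<bar> < \<rho>" "\<bar>v0\<bar> < \<rho>" using o by (simp_all add: vals)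
      show "V = Vb + v0" "V \<ge> 0" using o by (simp_all add: vals)
    qed
    have yLI: "y \<le> - \<gamma> * (s0\<^sup>2 + w0\<^sup>2) - \<beta> * mu * v0\<^sup>2 - (m / 4) * z0"
      using LI unfolding y_def e13 e2 e3[symmetric] by simp
    have Yb: "(-lam * s0 + e * w0)\<^sup>2 + (c * s0 - h * w0)\<^sup>2 \<le> 4 * A0\<^sup>2 * (s0\<^sup>2 + w0\<^sup>2)"
      by (rule Ybound) (use lam cb h in \<open>simp_all add: A0_def\<close>)
    have Wx: "Wf (x t) = (-lam * s0 + e * w0)\<^sup>2 + (c * s0 - h * w0)\<^sup>2 + D * (s0\<^sup>2 + w0\<^sup>2) + \<beta> * v0\<^sup>2 + z0"
      by (simp add: Wf_def s0_def w0_def v0_def z0_def)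
    have Xn: "s0\<^sup>2 + w0\<^sup>2 \<ge> 0" "\<beta> * v0\<^sup>2 \<ge> 0" "z0 \<ge> 0" using \<beta>p o vals by simp_all
    have k1: "\<kappa> * (4 * A0\<^sup>2 + D) \<le> \<gamma>"
    proof -
      have "4 * A0\<^sup>2 + D > 0" using Dp by (simp add: add_nonneg_pos)
      moreover have "\<kappa> \<le> \<gamma> / (4 * A0\<^sup>2 + D)" by (simp add: \<kappa>_def)
      ultimately show ?thesis by (simp add: field_simps)
    qed
    have k2: "\<kappa> \<le> mu" "\<kappa> \<le> m / 4" unfolding \<kappa>_def by (rule min.coboundedI1, rule min.cobounded2) (rule min.cobounded2)
    have "\<kappa> * Wf (x t) \<le> \<kappa> * ((4 * A0\<^sup>2 + D) * (s0\<^sup>2 + w0\<^sup>2) + \<beta> * v0\<^sup>2 + z0)"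
      using Yb \<kappa>p unfolding Wx by (intro mult_left_mono) (auto simp: algebra_simps)
    also have "\<dots> = (\<kappa> * (4 * A0\<^sup>2 + D)) * (s0\<^sup>2 + w0\<^sup>2) + \<kappa> * (\<beta> * v0\<^sup>2) + \<kappa> * z0"
      by (simp add: algebra_simps)
    also have "\<dots> \<le> \<gamma> * (s0\<^sup>2 + w0\<^sup>2) + mu * (\<beta> * v0\<^sup>2) + (m / 4) * z0"
      using k1 k2 Xn by (intro add_mono mult_right_mono) auto
    finally have "\<kappa> * Wf (x t) \<le> \<gamma> * (s0\<^sup>2 + w0\<^sup>2) + mu * (\<beta> * v0\<^sup>2) + (m / 4) * z0" .
    hence "y \<le> - \<kappa> * Wf (x t)" using yLI by (simp add: algebra_simps)
    thus ?thesis using dW by blast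
  qed
  have CC: "\<exists>\<delta>>0. \<forall>x. is_solution ?G orthant4 x \<and> dist (x 0) ?e < \<delta> \<longrightarrow>
      (\<forall>t\<ge>0. Nb \<rho>' (x t) \<and> dist (x t) ?e < 4 * \<rho>' \<and> Wf (x t) \<le> Wf (x 0) * exp (- \<kappa> * t))"
    if \<rho>': "\<rho>' > 0" "\<rho>' \<le> \<rho>" for \<rho>'
  proof -
    have \<omega>: "om \<rho>' > 0" using omp \<rho>' by simp
    have "isCont Wf ?e" using Wc by (simp add: continuous_on_eq_continuous_at)
    then obtain \<delta> where \<delta>: "\<delta> > 0" "\<And>q. dist q ?e < \<delta> \<Longrightarrow> dist (Wf q) (Wf ?e) < om \<rho>'"
      using \<omega> unfolding continuous_at_eps_delta by blast
    show ?thesis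
    proof (intro exI[of _ \<delta>] conjI[OF \<delta>(1)] allI impI)
      fix x t assume xa: "is_solution ?G orthant4 x \<and> dist (x 0) ?e < \<delta>" and t: "(t::real) \<ge> 0"
      note sb = sol_basic[OF xa[THEN conjunct1]]
      have W0: "Wf (x 0) < om \<rho>'" "Wf (x 0) \<ge> 0"
        using \<delta>(2)[of "x 0"] xa We Wnn[OF sb(3)[of 0]] by (auto simp: dist_real_def)
      have cont: "continuous_on {0..} (\<lambda>t. Wf (x t))"
        by (rule continuous_on_compose2[OF Wc sb(1)]) auto
      have mono: "Nb \<rho>' q \<Longrightarrow> Nb \<rho> q" for q using \<rho>' by (auto simp: Nb_def)
      have tr: "Wf (x t) \<le> Wf (x 0) * exp (- \<kappa> * t) \<and> Nb \<rho> (x t)"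
      proof (rule trap[OF cont, where P = "\<lambda>t. Nb \<rho> (x t)" and \<omega> = "om \<rho>'"])
        fix s :: real assume "s > 0" "Nb \<rho> (x s)"
        thus "\<exists>y. ((\<lambda>t. Wf (x t)) has_real_derivative y) (at s) \<and> y \<le> - \<kappa> * Wf (x s)"
          using DER xa by blast
      next
        fix s :: real assume s: "s \<ge> 0" "Wf (x s) \<le> om \<rho>'"
        thus "Nb \<rho> (x s)" using SL[OF sb(3)[OF s(1)] \<rho>'(1)] mono by blast
      next
        fix s :: real assume s: "s \<ge> 0"
        have "exp (- \<kappa> * s) \<le> 1" using \<kappa>p s by simp
        hence "Wf (x 0) * exp (- \<kappa> * s) \<le> Wf (x 0)" using W0(2) by (simp add: mult_left_le)
        thus "Wf (x 0) * exp (- \<kappa> * s) < om \<rho>'" using W0 by linarith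
      qed (use t in simp)
      have "Wf (x 0) * exp (- \<kappa> * t) \<le> Wf (x 0)" using \<kappa>p t W0(2) by (simp add: mult_left_le)
      hence "Wf (x t) \<le> om \<rho>'" using tr W0 by linarith
      hence "Nb \<rho>' (x t) \<and> dist (x t) ?e < 4 * \<rho>'" using SL[OF sb(3)[OF t] \<rho>'(1)] by blast
      thus "Nb \<rho>' (x t) \<and> dist (x t) ?e < 4 * \<rho>' \<and> Wf (x t) \<le> Wf (x 0) * exp (- \<kappa> * t)" using tr by blast
    qed
  qed
  have LS: "lyap_stable ?G orthant4 ?e" unfolding lyap_stable_def
  proof (intro allI impI)
    fix \<epsilon> :: real assume \<epsilon>: "\<epsilon> > 0"
    define \<rho>' where "\<rho>' = min \<rho> (\<epsilon> / 4)"
    have \<rho>': "\<rho>' > 0" "\<rho>' \<le> \<rho>" "4 * \<rho>' \<le> \<epsilon>" using \<rho>p \<epsilon> by (auto simp: \<rho>'_def)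
    obtain \<delta> where \<delta>: "\<delta> > 0" "\<forall>x. is_solution ?G orthant4 x \<and> dist (x 0) ?e < \<delta> \<longrightarrow>
      (\<forall>t\<ge>0. Nb \<rho>' (x t) \<and> dist (x t) ?e < 4 * \<rho>' \<and> Wf (x t) \<le> Wf (x 0) * exp (- \<kappa> * t))"
      using CC[OF \<rho>'(1,2)] by blast
    show "\<exists>\<delta>>0. \<forall>x. is_solution ?G orthant4 x \<and> dist (x 0) ?e < \<delta> \<longrightarrow> (\<forall>t\<ge>0. dist (x t) ?e < \<epsilon>)"
      using \<delta> \<rho>'(3) by (meson less_le_trans)
  qed
  obtain \<delta> where \<delta>: "\<delta> > 0" "\<forall>x. is_solution ?G orthant4 x \<and> dist (x 0) ?e < \<delta> \<longrightarrow>
      (\<forall>t\<ge>0. Nb \<rho> (x t) \<and> dist (x t) ?e < 4 * \<rho> \<and> Wf (x t) \<le> Wf (x 0) * exp (- \<kappa> * t))"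
    using CC[OF \<rho>p order_refl] by blast
  have AT: "(x \<longlongrightarrow> ?e) at_top" if x: "is_solution ?G orthant4 x" "dist (x 0) ?e < \<delta>" for x
  proof (rule tendstoI)
    fix \<epsilon> :: real assume \<epsilon>: "\<epsilon> > 0"
    note sb = sol_basic[OF x(1)]
    define \<rho>' where "\<rho>' = min \<rho> (\<epsilon> / 4)"
    have \<rho>': "\<rho>' > 0" "4 * \<rho>' \<le> \<epsilon>" using \<rho>p \<epsilon> by (auto simp: \<rho>'_def)
    define W0 where "W0 = Wf (x 0)"
    have W0: "W0 \<ge> 0" using Wnn[OF sb(3)[of 0]] by (simp add: W0_def)
    define \<omega> where "\<omega> = om \<rho>'"
    have \<omega>: "\<omega> > 0" using omp \<rho>' by (simp add: \<omega>_def)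
    define T where "T = W0 / (\<kappa> * \<omega>)"
    have T: "T \<ge> 0" using W0 \<kappa>p \<omega> by (simp add: T_def)
    show "eventually (\<lambda>t. dist (x t) ?e < \<epsilon>) at_top"
    proof (rule eventually_at_top_linorderI[of T])
      fix t assume tT: "t \<ge> T"
      have t0: "t \<ge> 0" using tT T by linarith
      have Wt: "Wf (x t) \<le> W0 * exp (- \<kappa> * t)" using \<delta>(2) x t0 by (simp add: W0_def)
      have "W0 = \<omega> * (\<kappa> * T)" using \<kappa>p \<omega> by (simp add: T_def)
      also have "\<dots> \<le> \<omega> * (\<kappa> * t)" using \<omega> \<kappa>p tT by (intro mult_left_mono) auto
      also have "\<kappa> * t \<le> exp (\<kappa> * t)" using exp_ge_add_one_self[of "\<kappa> * t"] by linarith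
      hence "\<omega> * (\<kappa> * t) \<le> \<omega> * exp (\<kappa> * t)" using \<omega> by (intro mult_left_mono) auto
      finally have "W0 \<le> \<omega> * exp (\<kappa> * t)" .
      hence "W0 * exp (- \<kappa> * t) \<le> \<omega> * exp (\<kappa> * t) * exp (- \<kappa> * t)" by (intro mult_right_mono) auto
      also have "\<dots> = \<omega>" by (simp flip: exp_add)
      finally have "Wf (x t) \<le> om \<rho>'" using Wt by (simp add: \<omega>_def)
      hence "dist (x t) ?e < 4 * \<rho>'" using SL[OF sb(3)[OF t0] \<rho>'(1)] by blast
      thus "dist (x t) ?e < \<epsilon>" using \<rho>' by linarith
    qed
  qed
  show ?thesis unfolding loc_asym_stable_def using LS \<delta>(1) AT by blast
qed

theorem mainTheorem7:
  fixes F1 f1 F2 f2 :: "real \<times> real \<Rightarrow> real"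
    and Lam mu r k gamma1 gamma2 v1 v2 Sb Vb Ib :: real
  assumes pos: "Lam > 0" "mu > 0" "r > 0" "k > 0" "gamma1 > 0" "gamma2 > 0"
    and nonneg: "v1 \<ge> 0" "v2 \<ge> 0"
    and H1: "incidence_hyp F1 f1" and H2: "incidence_hyp F2 f2"
    and Epos: "Sb > 0" "Vb > 0" "Ib > 0"
    and Eeq: "field F1 F2 Lam mu r k gamma1 gamma2 v1 v2 (Sb, Vb, Ib, 0) = (0, 0, 0, 0)"
  shows "(pdI F2 Sb 0 / (gamma2 + v2 + mu) + k * Vb / (gamma2 + v2 + mu) > 1 \<longrightarrow>
            unstable (field F1 F2 Lam mu r k gamma1 gamma2 v1 v2) orthant4 (Sb, Vb, Ib, 0))
       \<and> (pdI F2 Sb 0 / (gamma2 + v2 + mu) + k * Vb / (gamma2 + v2 + mu) < 1 \<longrightarrow>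
            loc_asym_stable (field F1 F2 Lam mu r k gamma1 gamma2 v1 v2) orthant4 (Sb, Vb, Ib, 0))"
proof -
  define a2 where "a2 = gamma2 + v2 + mu"
  have a2: "a2 > 0" using pos nonneg by (simp add: a2_def)
  have eqv: "pdI F2 Sb 0 / a2 + k * Vb / a2 = (pdI F2 Sb 0 + k * Vb) / a2" by (simp add: add_divide_distrib)
  show ?thesis
  proof (intro conjI impI)
    assume "pdI F2 Sb 0 / (gamma2 + v2 + mu) + k * Vb / (gamma2 + v2 + mu) > 1"
    hence "(pdI F2 Sb 0 + k * Vb) / a2 > 1" using eqv by (simp add: a2_def)
    hence "pdI F2 Sb 0 + k * Vb > gamma2 + v2 + mu" using a2 by (simp add: a2_def less_divide_eq_1_pos)
    thus "unstable (field F1 F2 Lam mu r k gamma1 gamma2 v1 v2) orthant4 (Sb, Vb, Ib, 0)"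
      by (rule unstable_part[OF pos nonneg H1 H2 Epos])
  next
    assume "pdI F2 Sb 0 / (gamma2 + v2 + mu) + k * Vb / (gamma2 + v2 + mu) < 1"
    hence "(pdI F2 Sb 0 + k * Vb) / a2 < 1" using eqv by (simp add: a2_def)
    hence "pdI F2 Sb 0 + k * Vb < gamma2 + v2 + mu" using a2 by (simp add: a2_def divide_less_eq_1_pos)
    thus "loc_asym_stable (field F1 F2 Lam mu r k gamma1 gamma2 v1 v2) orthant4 (Sb, Vb, Ib, 0)"
      by (rule stable_part[OF pos nonneg H1 H2 Epos Eeq])
  qed
qed

end
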